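(* Let $\varepsilon\in\mathbb C$ and $(\beta_k)_{k\in\mathbb Z}$ be generic, and let $(x_k^n)_{k,n\in\mathbb Z}$ be a generic solution of the discrete elliptic Toda system on the triangular lattice $$F(x_k^n,x_k^{n+1};\varepsilon)\,F(x_k^n,x_{k-1}^{n+1};\beta_{k-1}-\varepsilon)\,F(x_k^n,x_k^{n-1};\varepsilon)\,F(x_k^n,x_{k+1}^{n-1};\beta_k-\varepsilon)=F(x_k^n,x_{k+1}^n;\beta_k)\,F(x_k^n,x_{k-1}^n;\beta_{k-1})$$ for all $k,n$. Choose $p_k^n$ and $G_k^n$ with $$e^{2p_k^n}=F(x_k^n,x_k^{n-1};\varepsilon)F(x_k^n,x_{k+1}^{n-1};\beta_k-\varepsilon),\qquad e^{2\varepsilon G_k^n}=\frac{F(x_k^n,x_{k-1}^n;\beta_{k-1})}{F(x_k^n,x_{k-1}^{n+1};\beta_{k-1}-\varepsilon)},$$ and put $L_k^n=e^{p_k^n}M(x_k^n,\beta_k;\lambda)+e^{-p_k^n}M(x_k^n,-\beta_k;-\lambda)$, $V_k^n=e^{\varepsilon G_k^n}M(x_k^n,\varepsilon;\lambda)+e^{-\varepsilon G_k^n}M(x_k^n,-\varepsilon;-\lambda)$. Then for all $k,n$ and generic $\lambda$, the matrices $L_k^{n+1}V_k^n$ and $V_{k+1}^nL_k^n$ are proportional (i.e. they define the same Möbius transformation).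
   Context: $\wp,\sigma$: Weierstrass functions (invariants $g_2,g_3$, nondegenerate). $F(x_0,x_1;\alpha)=\frac{\sigma(x_0+x_1+\alpha)\sigma(x_0-x_1+\alpha)}{\sigma(x_0+x_1-\alpha)\sigma(x_0-x_1-\alpha)}$. $$M(x,\beta;\lambda)=\frac{\sigma^2(x+\lambda-\beta)\sigma^2(x-\lambda)}{\sigma(2x)\sigma(2\lambda)}\begin{pmatrix}-\wp(x+\lambda-\beta) & \wp(x+\lambda-\beta)\wp(x-\lambda)\\ -1 & \wp(x-\lambda)\end{pmatrix}.$$ *)

theory Defs
  imports "HOL-Analysis.Analysis"
begin

text \<open>Weierstrass functions for the period lattice generated by w1, w2
  (with Im (w2 / w1) \<noteq> 0). Every nondegenerate pair of invariants (g2, g3)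
  arises from such a lattice, so this parametrisation covers the paper's setting.\<close>

definition lat_pt :: "complex \<Rightarrow> complex \<Rightarrow> int \<Rightarrow> int \<Rightarrow> complex" where
  "lat_pt w1 w2 m n = of_int m * w1 + of_int n * w2"

definition lat_box :: "nat \<Rightarrow> (int \<times> int) set" where
  "lat_box N = ({- int N..int N} \<times> {- int N..int N}) - {(0, 0)}"

definition wsigma :: "complex \<Rightarrow> complex \<Rightarrow> complex \<Rightarrow> complex" where
  "wsigma w1 w2 z = lim (\<lambda>N. z * (\<Prod>(m, n)\<in>lat_box N.
      (let w = lat_pt w1 w2 m n in (1 - z / w) * exp (z / w + z\<^sup>2 / (2 * w\<^sup>2)))))"

definition wp :: "complex \<Rightarrow> complex \<Rightarrow> complex \<Rightarrow> complex" where
  "wp w1 w2 z = 1 / z\<^sup>2 + lim (\<lambda>N. (\<Sum>(m, n)\<in>lat_box N.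
      (let w = lat_pt w1 w2 m n in 1 / (z - w)\<^sup>2 - 1 / w\<^sup>2)))"

definition wF :: "complex \<Rightarrow> complex \<Rightarrow> complex \<Rightarrow> complex \<Rightarrow> complex \<Rightarrow> complex" where
  "wF w1 w2 x0 x1 a =
     (wsigma w1 w2 (x0 + x1 + a) * wsigma w1 w2 (x0 - x1 + a)) /
     (wsigma w1 w2 (x0 + x1 - a) * wsigma w1 w2 (x0 - x1 - a))"

text \<open>Genericity of the arguments of F: all sigma factors are nonzero.\<close>
definition wF_ok :: "complex \<Rightarrow> complex \<Rightarrow> complex \<Rightarrow> complex \<Rightarrow> complex \<Rightarrow> bool" where
  "wF_ok w1 w2 x0 x1 a \<longleftrightarrow>
     wsigma w1 w2 (x0 + x1 + a) \<noteq> 0 \<and> wsigma w1 w2 (x0 - x1 + a) \<noteq> 0 \<and>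
     wsigma w1 w2 (x0 + x1 - a) \<noteq> 0 \<and> wsigma w1 w2 (x0 - x1 - a) \<noteq> 0"

definition mat2 :: "complex \<Rightarrow> complex \<Rightarrow> complex \<Rightarrow> complex \<Rightarrow> complex^2^2" where
  "mat2 a b c d = vector [vector [a, b], vector [c, d]]"

definition msc :: "complex \<Rightarrow> complex^2^2 \<Rightarrow> complex^2^2" (infixl \<open>*\<^sub>m\<close> 70) where
  "c *\<^sub>m A = (\<chi> i j. c * A $ i $ j)"

definition wM :: "complex \<Rightarrow> complex \<Rightarrow> complex \<Rightarrow> complex \<Rightarrow> complex \<Rightarrow> complex^2^2" where
  "wM w1 w2 x b l =
     ((wsigma w1 w2 (x + l - b))\<^sup>2 * (wsigma w1 w2 (x - l))\<^sup>2 /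
      (wsigma w1 w2 (2 * x) * wsigma w1 w2 (2 * l))) *\<^sub>m
     mat2 (- wp w1 w2 (x + l - b)) (wp w1 w2 (x + l - b) * wp w1 w2 (x - l))
          (-1) (wp w1 w2 (x - l))"

definition wL :: "complex \<Rightarrow> complex \<Rightarrow> complex \<Rightarrow> complex \<Rightarrow> complex \<Rightarrow> complex \<Rightarrow> complex^2^2" where
  "wL w1 w2 p x b l = exp p *\<^sub>m wM w1 w2 x b l + exp (- p) *\<^sub>m wM w1 w2 x (- b) (- l)"

definition wV :: "complex \<Rightarrow> complex \<Rightarrow> complex \<Rightarrow> complex \<Rightarrow> complex \<Rightarrow> complex \<Rightarrow> complex^2^2" where
  "wV w1 w2 eps G x l = exp (eps * G) *\<^sub>m wM w1 w2 x eps l + exp (- (eps * G)) *\<^sub>m wM w1 w2 x (- eps) (- l)"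

end

theory Submission
  imports Defs "HOL-Complex_Analysis.Complex_Analysis"
begin

locale wlat =
  fixes w1 w2 :: complex
  assumes periods: "Im (w2 / w1) \<noteq> 0"
begin

abbreviation om :: "int \<times> int \<Rightarrow> complex" where
  "om i \<equiv> lat_pt w1 w2 (fst i) (snd i)"

definition I0 :: "(int \<times> int) set" where "I0 = UNIV - {(0,0)}"

definition Lam :: "complex set" where "Lam = range om"

lemma w1_nz: "w1 \<noteq> 0"
  using periods by auto

lemma lat_lower: "\<exists>\<delta>>0. \<forall>m n. \<delta> * (\<bar>real_of_int m\<bar> + \<bar>real_of_int n\<bar>) \<le> norm (lat_pt w1 w2 m n)"
proof -
  define \<tau> where "\<tau> = w2 / w1"
  define t where "t = \<bar>Im \<tau>\<bar>"
  define K where "K = norm \<tau>"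
  have t: "t > 0" using periods by (simp add: t_def \<tau>_def)
  define d0 where "d0 = 1 / (1 + (K + 1) / t)"
  have d0: "d0 > 0" using t by (simp add: d0_def K_def add_pos_nonneg)
  have key: "d0 * (\<bar>real_of_int m\<bar> + \<bar>real_of_int n\<bar>) \<le> norm (of_int m + of_int n * \<tau>)" for m n
  proof -
    define A where "A = norm (of_int m + of_int n * \<tau>)"
    have A1: "\<bar>real_of_int n\<bar> * t \<le> A"
    proof -
      have "Im (of_int m + of_int n * \<tau>) = of_int n * Im \<tau>" by simp
      hence "\<bar>real_of_int n\<bar> * t = \<bar>Im (of_int m + of_int n * \<tau>)\<bar>" by (simp add: t_def abs_mult)
      also have "\<dots> \<le> A" unfolding A_def by (rule abs_Im_le_cmod)
      finally show ?thesis .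
    qed
    have A2: "\<bar>real_of_int m\<bar> \<le> A + K * \<bar>real_of_int n\<bar>"
    proof -
      have "\<bar>real_of_int m\<bar> = norm (of_int m :: complex)" by simp
      also have "\<dots> \<le> norm (of_int m + of_int n * \<tau>) + norm (of_int n * \<tau>)"
        by (metis add_diff_cancel_right' norm_triangle_ineq4)
      also have "norm (of_int n * \<tau>) = K * \<bar>real_of_int n\<bar>" by (simp add: K_def norm_mult)
      finally show ?thesis by (simp add: A_def)
    qed
    have n_le: "\<bar>real_of_int n\<bar> \<le> A / t" using A1 t by (simp add: field_simps)
    have "\<bar>real_of_int m\<bar> + \<bar>real_of_int n\<bar> \<le> A + (K + 1) * (A / t)"
      using A2 n_le mult_left_mono[OF n_le, of K] by (simp add: K_def algebra_simps)
    also have "\<dots> = A * (1 + (K + 1) / t)" by (simp add: algebra_simps)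
    finally have "\<bar>real_of_int m\<bar> + \<bar>real_of_int n\<bar> \<le> A * (1 + (K + 1) / t)" .
    moreover have "1 + (K + 1) / t > 0" using t by (simp add: K_def add_pos_nonneg)
    ultimately show ?thesis unfolding d0_def A_def by (simp add: field_simps)
  qed
  show ?thesis
  proof (intro exI[of _ "d0 * norm w1"] conjI allI)
    show "d0 * norm w1 > 0" using d0 w1_nz by simp
    fix m n
    have "lat_pt w1 w2 m n = w1 * (of_int m + of_int n * \<tau>)"
      using w1_nz by (simp add: lat_pt_def \<tau>_def field_simps)
    hence "norm (lat_pt w1 w2 m n) = norm w1 * norm (of_int m + of_int n * \<tau>)"
      by (simp add: norm_mult)
    thus "d0 * norm w1 * (\<bar>real_of_int m\<bar> + \<bar>real_of_int n\<bar>) \<le> norm (lat_pt w1 w2 m n)"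
      using mult_left_mono[OF key[of m n], of "norm w1"] by (simp add: algebra_simps)
  qed
qed

definition dl :: real where "dl = (SOME \<delta>. \<delta> > 0 \<and> (\<forall>m n. \<delta> * (\<bar>real_of_int m\<bar> + \<bar>real_of_int n\<bar>) \<le> norm (lat_pt w1 w2 m n)))"

lemma dl_pos: "dl > 0" and dl_le: "dl * (\<bar>real_of_int m\<bar> + \<bar>real_of_int n\<bar>) \<le> norm (lat_pt w1 w2 m n)"
  using someI_ex[OF lat_lower] unfolding dl_def by blast+

lemma dl_le': "dl * (\<bar>real_of_int (fst i)\<bar> + \<bar>real_of_int (snd i)\<bar>) \<le> norm (om i)"
  using dl_le by simp

lemma om_eq_0_iff: "om i = 0 \<longleftrightarrow> i = (0,0)"
proof
  assume "om i = 0"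
  hence "dl * (\<bar>real_of_int (fst i)\<bar> + \<bar>real_of_int (snd i)\<bar>) \<le> 0" using dl_le'[of i] by simp
  hence "\<bar>real_of_int (fst i)\<bar> + \<bar>real_of_int (snd i)\<bar> \<le> 0" using dl_pos
    by (simp add: mult_le_0_iff)
  thus "i = (0,0)" by (cases i) auto
qed (simp add: lat_pt_def)

lemma om_nz: "i \<in> I0 \<Longrightarrow> om i \<noteq> 0"
  by (simp add: I0_def om_eq_0_iff)

lemma finite_small: "finite {i. norm (om i) \<le> r}"
proof -
  obtain N :: nat where N: "r / dl \<le> real N" using real_arch_simple by blast
  have "{i. norm (om i) \<le> r} \<subseteq> {-int N..int N} \<times> {-int N..int N}"
  proof safe
    fix a b assume "norm (om (a,b)) \<le> r"
    hence "dl * (\<bar>real_of_int a\<bar> + \<bar>real_of_int b\<bar>) \<le> r" using dl_le'[of "(a,b)"] by simp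
    hence "\<bar>real_of_int a\<bar> + \<bar>real_of_int b\<bar> \<le> r / dl" using dl_pos by (simp add: field_simps)
    hence "\<bar>real_of_int a\<bar> \<le> real N" "\<bar>real_of_int b\<bar> \<le> real N" using N by linarith+
    thus "a \<in> {-int N..int N}" "b \<in> {-int N..int N}" by (simp_all add: abs_le_iff; linarith)+
  qed
  thus ?thesis by (rule finite_subset) auto
qed

definition aa :: "int \<Rightarrow> real" where "aa m = 1 / ((1 + \<bar>real_of_int m\<bar>) * sqrt (1 + \<bar>real_of_int m\<bar>))"

lemma aa_nonneg: "aa m \<ge> 0"
  unfolding aa_def by simp

lemma aa_nat_summable: "summable (\<lambda>n::nat. 1 / ((1 + real n) * sqrt (1 + real n)))"
proof -
  have s0: "summable (\<lambda>n::nat. real n powr (-3/2))"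
    using summable_real_powr_iff[of "-3/2"] by simp
  have s1: "summable (\<lambda>n::nat. real (Suc n) powr (-3/2))"
    using summable_Suc_iff[of "\<lambda>n::nat. real n powr (-3/2)"] s0 by (simp only:)
  have eq: "real (Suc n) powr (-3/2) = 1 / ((1 + real n) * sqrt (1 + real n))" for n
  proof -
    have "real (Suc n) powr (-3/2) = inverse (real (Suc n) powr (3/2))"
      by (subst powr_minus[symmetric]) simp
    also have "real (Suc n) powr (3/2) = real (Suc n) powr 1 * real (Suc n) powr (1/2)"
      by (subst powr_add[symmetric]) simp
    also have "\<dots> = (1 + real n) * sqrt (1 + real n)"
      by (simp add: powr_half_sqrt)
    finally show ?thesis by (simp only: divide_inverse mult_1)
  qed
  have "(\<lambda>n::nat. real (Suc n) powr (-3/2)) = (\<lambda>n::nat. 1 / ((1 + real n) * sqrt (1 + real n)))"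
    by (rule ext) (rule eq)
  with s1 show ?thesis by (simp only:)
qed

lemma aa_summable: "aa summable_on (UNIV :: int set)"
proof -
  have s0: "(\<lambda>n::nat. 1 / ((1 + real n) * sqrt (1 + real n))) summable_on UNIV"
    by (rule norm_summable_imp_summable_on) (use aa_nat_summable in simp)
  have e1: "(aa \<circ> int) = (\<lambda>n::nat. 1 / ((1 + real n) * sqrt (1 + real n)))"
    by (rule ext) (simp add: aa_def)
  have e2: "(aa \<circ> (\<lambda>n. - int n)) = (\<lambda>n::nat. 1 / ((1 + real n) * sqrt (1 + real n)))"
    by (rule ext) (simp add: aa_def)
  have i2: "inj_on (\<lambda>n::nat. - int n) UNIV" by (rule inj_onI) simp
  have A: "aa summable_on (int ` UNIV)"
    using summable_on_reindex[of int UNIV aa] e1 s0 by simp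
  have B: "aa summable_on ((\<lambda>n. - int n) ` UNIV)"
    using summable_on_reindex[OF i2, of aa] e2 s0 by simp
  have U: "UNIV = int ` UNIV \<union> (\<lambda>n. - int n) ` UNIV"
  proof (rule set_eqI)
    fix x :: int
    show "x \<in> UNIV \<longleftrightarrow> x \<in> int ` UNIV \<union> (\<lambda>n. - int n) ` UNIV"
    proof (cases "x \<ge> 0")
      case True
      hence "x = int (nat x)" by simp
      thus ?thesis by blast
    next
      case False
      hence "x = - int (nat (- x))" by simp
      thus ?thesis by blast
    qed
  qed
  show ?thesis by (subst U) (rule summable_on_union[OF A B])
qed

lemma aa2_summable: "(\<lambda>i. aa (fst i) * aa (snd i)) summable_on (UNIV :: (int \<times> int) set)"
proof (rule nonneg_bdd_above_summable_on)
  show "0 \<le> aa (fst x) * aa (snd x)" for x using aa_nonneg by simp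
  show "bdd_above (sum (\<lambda>i. aa (fst i) * aa (snd i)) ` {F. F \<subseteq> UNIV \<and> finite F})"
  proof (rule bdd_aboveI2)
    fix F :: "(int \<times> int) set" assume "F \<in> {F. F \<subseteq> UNIV \<and> finite F}"
    hence F: "finite F" by simp
    have "(\<Sum>i\<in>F. aa (fst i) * aa (snd i)) \<le> (\<Sum>i\<in>fst ` F \<times> snd ` F. aa (fst i) * aa (snd i))"
      by (rule sum_mono2) (use F aa_nonneg in \<open>auto intro: mult_nonneg_nonneg simp: rev_image_eqI\<close>)
    also have "\<dots> = (\<Sum>m\<in>fst ` F. aa m) * (\<Sum>n\<in>snd ` F. aa n)"
      by (simp add: sum_product sum.cartesian_product case_prod_unfold)
    also have "\<dots> \<le> infsum aa UNIV * infsum aa UNIV"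
      by (intro mult_mono finite_sum_le_infsum aa_summable sum_nonneg infsum_nonneg)
         (use F aa_nonneg in auto)
    finally show "(\<Sum>i\<in>F. aa (fst i) * aa (snd i)) \<le> infsum aa UNIV * infsum aa UNIV" .
  qed
qed

lemma cube_bound:
  fixes m n :: int
  assumes "(m, n) \<noteq> (0, 0)"
  shows "aa m * aa n * (\<bar>real_of_int m\<bar> + \<bar>real_of_int n\<bar>) ^ 3 \<ge> 8 / 27"
proof -
  define P where "P = 1 + \<bar>real_of_int m\<bar>"
  define Q where "Q = 1 + \<bar>real_of_int n\<bar>"
  define s where "s = \<bar>real_of_int m\<bar> + \<bar>real_of_int n\<bar>"
  have s1: "s \<ge> 1" using assms unfolding s_def by (cases "m = 0") auto
  have P1: "P \<ge> 1" and Q1: "Q \<ge> 1" by (auto simp: P_def Q_def)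
  define r where "r = sqrt (P * Q)"
  have r0: "r > 0" using P1 Q1 by (simp add: r_def)
  have rr: "r * r = P * Q" using P1 Q1 by (simp add: r_def)
  have "r \<le> (P + Q) / 2"
  proof -
    have "(sqrt P - sqrt Q)^2 \<ge> 0" by simp
    hence "2 * (sqrt P * sqrt Q) \<le> P + Q" using P1 Q1 by (simp add: power2_eq_square algebra_simps)
    thus ?thesis by (simp add: r_def real_sqrt_mult)
  qed
  also have "(P + Q) / 2 \<le> 3 * s / 2" using s1 by (simp add: P_def Q_def s_def)
  finally have r_le: "r \<le> 3 * s / 2" .
  have am: "aa m = 1 / (P * sqrt P)" by (simp add: aa_def P_def)
  have an: "aa n = 1 / (Q * sqrt Q)" by (simp add: aa_def Q_def)
  have "sqrt P * sqrt Q = r" by (simp add: r_def real_sqrt_mult)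
  hence "aa m * aa n = 1 / ((P * Q) * r)" by (simp add: am an algebra_simps)
  hence "aa m * aa n = 1 / (r * r * r)" by (simp add: rr)
  moreover have "r * r * r \<le> (3 * s / 2) ^ 3"
  proof -
    have "r * r * r = r ^ 3" by (simp add: power3_eq_cube)
    also have "\<dots> \<le> (3 * s / 2) ^ 3" by (rule power_mono[OF r_le]) (use r0 in simp)
    finally show ?thesis .
  qed
  ultimately have "aa m * aa n \<ge> 1 / (3 * s / 2) ^ 3"
    using r0 by (simp add: frac_le)
  hence "aa m * aa n * s ^ 3 \<ge> 1 / (3 * s / 2) ^ 3 * s ^ 3"
    using s1 by (intro mult_right_mono) auto
  also have "1 / (3 * s / 2) ^ 3 * s ^ 3 = 8 / 27" using s1 by (simp add: field_simps power3_eq_cube)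
  finally show ?thesis by (simp add: s_def)
qed

lemma summ3: "(\<lambda>i. 1 / norm (om i) ^ 3) summable_on I0"
proof (rule summable_on_comparison_test)
  show "(\<lambda>i. 27 / 8 / dl ^ 3 * (aa (fst i) * aa (snd i))) summable_on I0"
    by (intro summable_on_cmult_right summable_on_subset[OF aa2_summable]) auto
  fix i assume i: "i \<in> I0"
  show "0 \<le> 1 / norm (om i) ^ 3" by simp
  define s where "s = \<bar>real_of_int (fst i)\<bar> + \<bar>real_of_int (snd i)\<bar>"
  have ne: "(fst i, snd i) \<noteq> (0,0)" using i by (auto simp: I0_def)
  have s1: "s > 0" using ne unfolding s_def by (cases "fst i = 0") auto
  have cb: "aa (fst i) * aa (snd i) * s ^ 3 \<ge> 8 / 27" using cube_bound[OF ne] by (simp add: s_def)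
  have "(dl * s) ^ 3 \<le> norm (om i) ^ 3"
    by (rule power_mono) (use dl_le'[of i] dl_pos s1 in \<open>auto simp: s_def\<close>)
  moreover have "0 < (dl * s) ^ 3" using dl_pos s1 by simp
  ultimately have "1 / norm (om i) ^ 3 \<le> 1 / (dl * s) ^ 3"
    by (intro frac_le) simp_all
  also have "\<dots> = 27 / 8 / dl ^ 3 * (8 / 27 / s ^ 3)"
    using dl_pos s1 by (simp add: field_simps power_mult_distrib)
  also have "\<dots> \<le> 27 / 8 / dl ^ 3 * (aa (fst i) * aa (snd i))"
    using cb dl_pos s1 by (intro mult_left_mono) (auto simp: field_simps)
  finally show "1 / norm (om i) ^ 3 \<le> 27 / 8 / dl ^ 3 * (aa (fst i) * aa (snd i))" .
qed

end


context wlat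
begin

lemma finite_lat_box: "finite (lat_box N)"
  unfolding lat_box_def by auto

lemma lat_box_mono: "N \<le> M \<Longrightarrow> lat_box N \<subseteq> lat_box M"
  unfolding lat_box_def by auto

lemma lat_box_I0: "lat_box N \<subseteq> I0"
  unfolding lat_box_def I0_def by auto

lemma finite_in_box:
  assumes "finite X" "X \<subseteq> I0"
  shows "\<exists>N. X \<subseteq> lat_box N"
proof -
  define N where "N = Max (insert 0 ((\<lambda>i. nat \<bar>fst i\<bar>) ` X \<union> (\<lambda>i. nat \<bar>snd i\<bar>) ` X))"
  have "X \<subseteq> lat_box N"
  proof
    fix i assume i: "i \<in> X"
    have "nat \<bar>fst i\<bar> \<le> N" "nat \<bar>snd i\<bar> \<le> N"
      unfolding N_def using assms(1) i by (auto intro!: Max_ge)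
    moreover have "i \<noteq> (0,0)" using i assms(2) by (auto simp: I0_def)
    ultimately show "i \<in> lat_box N" unfolding lat_box_def by (cases i) auto
  qed
  thus ?thesis by blast
qed

lemma box_filterlim:
  assumes "A \<subseteq> I0"
  shows "filterlim (\<lambda>N. A \<inter> lat_box N) (finite_subsets_at_top A) sequentially"
  unfolding filterlim_finite_subsets_at_top
proof (intro allI impI)
  fix X assume X: "finite X \<and> X \<subseteq> A"
  then obtain N0 where N0: "X \<subseteq> lat_box N0" using finite_in_box[of X] assms by blast
  show "\<forall>\<^sub>F N in sequentially. finite (A \<inter> lat_box N) \<and> X \<subseteq> A \<inter> lat_box N \<and> A \<inter> lat_box N \<subseteq> A"
    using eventually_ge_at_top[of N0]
  proof eventually_elim
    case (elim N)
    thus ?case using X N0 lat_box_mono[OF elim] finite_lat_box by auto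
  qed
qed

lemma box_tendsto:
  assumes "(f has_sum S) A" "A \<subseteq> I0"
  shows "(\<lambda>N. \<Sum>i\<in>A \<inter> lat_box N. f i) \<longlonglongrightarrow> S"
proof -
  have "(sum f \<longlongrightarrow> S) (finite_subsets_at_top A)" using assms(1) by (simp add: has_sum_def)
  from filterlim_compose[OF this box_filterlim[OF assms(2)]] show ?thesis by (simp add: o_def)
qed

lemma summ_bound:
  fixes f :: "int \<times> int \<Rightarrow> complex"
  assumes "A \<subseteq> I0" "\<And>i. i \<in> A \<Longrightarrow> norm (f i) \<le> C / norm (om i) ^ 3"
  shows "f summable_on A"
proof -
  have "(\<lambda>i. C * (1 / norm (om i) ^ 3)) summable_on A"
    by (intro summable_on_cmult_right summable_on_subset[OF summ3 assms(1)])
  hence "(\<lambda>i. norm (f i)) summable_on A"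
    by (rule summable_on_comparison_test) (use assms(2) in auto)
  thus ?thesis by (rule abs_summable_summable)
qed

lemma infsum_deriv:
  fixes f f' :: "int \<times> int \<Rightarrow> complex \<Rightarrow> complex"
  assumes A: "A \<subseteq> I0" and R: "R > 0"
    and b0: "\<And>i z. i \<in> A \<Longrightarrow> z \<in> cball 0 R \<Longrightarrow> norm (f i z) \<le> C / norm (om i) ^ 3"
    and b1: "\<And>i z. i \<in> A \<Longrightarrow> z \<in> cball 0 R \<Longrightarrow> norm (f' i z) \<le> C' / norm (om i) ^ 3"
    and d: "\<And>i z. i \<in> A \<Longrightarrow> z \<in> cball 0 R \<Longrightarrow> (f i has_field_derivative f' i z) (at z)"
  shows "\<And>z. z \<in> ball 0 R \<Longrightarrow> ((\<lambda>z. infsum (\<lambda>i. f i z) A) has_field_derivative infsum (\<lambda>i. f' i z) A) (at z)"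
proof -
  have Msum: "(\<lambda>i. C / norm (om i) ^ 3) summable_on A"
    using summable_on_cmult_right[OF summable_on_subset[OF summ3 A], of C] by simp
  have ul: "uniform_limit (cball 0 R) (\<lambda>X z. \<Sum>i\<in>X. f i z) (\<lambda>z. infsum (\<lambda>i. f i z) A) (finite_subsets_at_top A)"
    by (rule Weierstrass_m_test_general[OF b0 Msum])
  have ev: "\<forall>\<^sub>F X in finite_subsets_at_top A. continuous_on (cball 0 R) (\<lambda>z. \<Sum>i\<in>X. f i z) \<and>
      (\<forall>w\<in>ball 0 R. ((\<lambda>z. \<Sum>i\<in>X. f i z) has_field_derivative (\<Sum>i\<in>X. f' i w)) (at w))"
  proof (rule eventually_finite_subsets_at_top_weakI)
    fix X assume X: "finite X" "X \<subseteq> A"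
    have "continuous_on (cball 0 R) (\<lambda>z. \<Sum>i\<in>X. f i z)"
    proof (intro continuous_on_sum)
      fix i assume "i \<in> X"
      hence "i \<in> A" using X by auto
      thus "continuous_on (cball 0 R) (f i)"
        by (intro continuous_at_imp_continuous_on ballI DERIV_isCont[OF d])
    qed
    moreover have "\<forall>w\<in>ball 0 R. ((\<lambda>z. \<Sum>i\<in>X. f i z) has_field_derivative (\<Sum>i\<in>X. f' i w)) (at w)"
      using X d by (auto intro!: DERIV_sum)
    ultimately show "continuous_on (cball 0 R) (\<lambda>z. \<Sum>i\<in>X. f i z) \<and>
      (\<forall>w\<in>ball 0 R. ((\<lambda>z. \<Sum>i\<in>X. f i z) has_field_derivative (\<Sum>i\<in>X. f' i w)) (at w))" by blast
  qed
  obtain g' where g': "\<And>w. w \<in> ball 0 R \<Longrightarrow> ((\<lambda>z. infsum (\<lambda>i. f i z) A) has_field_derivative g' w) (at w) \<and>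
      ((\<lambda>X. \<Sum>i\<in>X. f' i w) \<longlongrightarrow> g' w) (finite_subsets_at_top A)"
    using has_complex_derivative_uniform_limit[OF ev ul _ R] by auto
  fix z :: complex assume z: "z \<in> ball 0 R"
  have "(\<lambda>i. f' i z) summable_on A"
    by (rule summ_bound[OF A, of _ C']) (use b1 z in auto)
  hence "((\<lambda>X. \<Sum>i\<in>X. f' i z) \<longlongrightarrow> infsum (\<lambda>i. f' i z) A) (finite_subsets_at_top A)"
    using has_sum_infsum[of "\<lambda>i. f' i z" A] by (simp add: has_sum_def)
  hence "g' z = infsum (\<lambda>i. f' i z) A"
    using g'[OF z] by (intro tendsto_unique[of "finite_subsets_at_top A"]) auto
  thus "((\<lambda>z. infsum (\<lambda>i. f i z) A) has_field_derivative infsum (\<lambda>i. f' i z) A) (at z)"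
    using g'[OF z] by simp
qed

end


definition g0 :: "complex \<Rightarrow> complex" where "g0 t = Ln (1 - t) + t + t\<^sup>2 / 2"
definition phi :: "complex \<Rightarrow> complex" where "phi t = (1 - t) * exp (t + t\<^sup>2 / 2)"

lemma re_pos_notin: "norm (t::complex) < 1 \<Longrightarrow> 1 - t \<notin> \<real>\<^sub>\<le>\<^sub>0"
proof -
  assume t: "norm t < 1"
  have "Re t \<le> norm t" by (rule complex_Re_le_cmod)
  hence "Re (1 - t) > 0" using t by simp
  thus ?thesis by (auto simp: complex_nonpos_Reals_iff)
qed

lemma g0_deriv:
  assumes "norm t < 1"
  shows "(g0 has_field_derivative (- (t\<^sup>2) / (1 - t))) (at t)"
proof -
  have ne: "1 - t \<noteq> 0" using assms by auto
  note nr = re_pos_notin[OF assms]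
  show ?thesis unfolding g0_def[abs_def]
    using ne nr by (auto intro!: derivative_eq_intros simp: field_simps power2_eq_square)
qed

lemma g0_0: "g0 0 = 0" by (simp add: g0_def)

lemma g0_bound:
  assumes "norm t \<le> 1/2"
  shows "norm (g0 t) \<le> 2 * norm t ^ 3"
proof -
  have "norm (g0 t - g0 0) \<le> (2 * norm t ^ 2) * norm (t - 0)"
  proof (rule field_differentiable_bound[of "cball 0 (norm t)" g0 "\<lambda>s. - (s\<^sup>2) / (1 - s)"])
    show "convex (cball (0::complex) (norm t))" by (rule convex_cball)
    fix s assume s: "s \<in> cball (0::complex) (norm t)"
    hence sn: "norm s \<le> norm t" by simp
    hence s1: "norm s < 1" using assms by simp
    show "(g0 has_field_derivative - (s\<^sup>2) / (1 - s)) (at s within cball 0 (norm t))"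
      by (rule has_field_derivative_at_within[OF g0_deriv[OF s1]])
    have "norm (1 - s) \<ge> 1 - norm s" using norm_triangle_ineq2[of 1 s] by simp
    hence d: "norm (1 - s) \<ge> 1/2" using sn assms by simp
    have "norm (- (s\<^sup>2) / (1 - s)) = norm s ^ 2 / norm (1 - s)" by (simp add: norm_divide norm_power)
    also have "\<dots> \<le> norm t ^ 2 / (1/2)"
      by (rule frac_le) (use d sn in \<open>auto intro: power_mono\<close>)
    finally show "norm (- (s\<^sup>2) / (1 - s)) \<le> 2 * norm t ^ 2" by simp
  qed auto
  thus ?thesis by (simp add: g0_0 power3_eq_cube power2_eq_square mult.assoc)
qed

lemma phi_exp: "norm t < 1 \<Longrightarrow> phi t = exp (g0 t)"
proof -
  assume "norm t < 1"
  hence nz: "1 - t \<noteq> 0" by auto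
  have "exp (g0 t) = exp (Ln (1 - t)) * exp (t + t\<^sup>2 / 2)"
    by (simp add: g0_def exp_add[symmetric] add.assoc)
  thus ?thesis using nz by (simp add: phi_def)
qed

context wlat
begin

definition Sm :: "real \<Rightarrow> (int \<times> int) set" where "Sm R = {i \<in> I0. norm (om i) \<le> 2 * R}"
definition Lg :: "real \<Rightarrow> (int \<times> int) set" where "Lg R = {i \<in> I0. 2 * R < norm (om i)}"

definition h0 :: "int \<times> int \<Rightarrow> complex \<Rightarrow> complex" where "h0 i z = g0 (z / om i)"
definition h1 :: "int \<times> int \<Rightarrow> complex \<Rightarrow> complex" where "h1 i z = z\<^sup>2 / ((om i)\<^sup>2 * (z - om i))"
definition h2 :: "int \<times> int \<Rightarrow> complex \<Rightarrow> complex" where "h2 i z = 1 / (om i)\<^sup>2 - 1 / (z - om i)\<^sup>2"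
definition h3 :: "int \<times> int \<Rightarrow> complex \<Rightarrow> complex" where "h3 i z = 2 / (z - om i) ^ 3"

lemma finite_Sm: "finite (Sm R)"
  by (rule finite_subset[OF _ finite_small[of "2 * R"]]) (auto simp: Sm_def)

lemma Sm_Lg_disj: "Sm R \<inter> Lg R = {}" and Sm_Lg_un: "Sm R \<union> Lg R = I0"
  by (auto simp: Sm_def Lg_def)

lemma Lg_sub: "Lg R \<subseteq> I0" by (auto simp: Lg_def)

lemma Lg_big: "i \<in> Lg R \<Longrightarrow> 2 * R < norm (om i)" by (simp add: Lg_def)

lemma far:
  assumes "norm z \<le> R" "2 * R < norm w"
  shows "norm (z - w) \<ge> norm w / 2" "norm (z - w) > 0" "norm w > 0"
proof -
  have "norm w - norm z \<le> norm (z - w)" using norm_triangle_ineq2[of w z] by (simp add: norm_minus_commute)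
  moreover have "R \<ge> 0" using assms(1) norm_ge_zero order_trans by blast
  ultimately show "norm (z - w) \<ge> norm w / 2" using assms by linarith
  thus "norm (z - w) > 0" "norm w > 0" using assms \<open>R \<ge> 0\<close> by linarith+
qed

lemma bound_h0:
  assumes "i \<in> Lg R" "norm z \<le> R"
  shows "norm (h0 i z) \<le> 2 * R ^ 3 / norm (om i) ^ 3"
proof -
  have w: "2 * R < norm (om i)" using Lg_big[OF assms(1)] .
  have R0: "R \<ge> 0" using assms(2) norm_ge_zero order_trans by blast
  have wp: "norm (om i) > 0" using w R0 by linarith
  have t: "norm (z / om i) \<le> 1/2"
    using assms(2) w wp by (simp add: norm_divide field_simps)
  have "norm (h0 i z) \<le> 2 * norm (z / om i) ^ 3" unfolding h0_def by (rule g0_bound[OF t])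
  also have "\<dots> = 2 * norm z ^ 3 / norm (om i) ^ 3" by (simp add: norm_divide power_divide)
  also have "\<dots> \<le> 2 * R ^ 3 / norm (om i) ^ 3"
    using assms(2) wp by (intro divide_right_mono mult_left_mono power_mono) auto
  finally show ?thesis .
qed

lemma bound_h1:
  assumes "i \<in> Lg R" "norm z \<le> R"
  shows "norm (h1 i z) \<le> 2 * R ^ 2 / norm (om i) ^ 3"
proof -
  have w: "2 * R < norm (om i)" using Lg_big[OF assms(1)] .
  note f = far[OF assms(2) w]
  have "norm (h1 i z) = norm z ^ 2 / (norm (om i) ^ 2 * norm (z - om i))"
    by (simp add: h1_def norm_divide norm_mult norm_power)
  also have "\<dots> \<le> R ^ 2 / (norm (om i) ^ 2 * (norm (om i) / 2))"
    by (rule frac_le) (use f assms(2) in \<open>auto intro!: power_mono mult_left_mono\<close>)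
  also have "\<dots> = 2 * R ^ 2 / norm (om i) ^ 3"
    using f by (simp add: field_simps power3_eq_cube power2_eq_square)
  finally show ?thesis .
qed

lemma bound_h2:
  assumes "i \<in> Lg R" "norm z \<le> R"
  shows "norm (h2 i z) \<le> 10 * R / norm (om i) ^ 3"
proof -
  have w: "2 * R < norm (om i)" using Lg_big[OF assms(1)] .
  note f = far[OF assms(2) w]
  have R0: "R \<ge> 0" using assms(2) norm_ge_zero order_trans by blast
  have ne: "z - om i \<noteq> 0" "om i \<noteq> 0" using f by auto
  have "h2 i z = (1 * (z - om i)\<^sup>2 - 1 * (om i)\<^sup>2) / ((om i)\<^sup>2 * (z - om i)\<^sup>2)"
    unfolding h2_def by (rule diff_frac_eq) (use ne in simp_all)
  also have "1 * (z - om i)\<^sup>2 - 1 * (om i)\<^sup>2 = z * (z - 2 * om i)"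
    by (simp add: power2_eq_square algebra_simps)
  finally have "h2 i z = z * (z - 2 * om i) / ((om i)\<^sup>2 * (z - om i)\<^sup>2)" .
  hence "norm (h2 i z) = norm z * norm (z - 2 * om i) / (norm (om i) ^ 2 * norm (z - om i) ^ 2)"
    by (simp add: norm_divide norm_mult norm_power)
  also have "\<dots> \<le> (R * (5/2 * norm (om i))) / (norm (om i) ^ 2 * (norm (om i) / 2) ^ 2)"
  proof (rule frac_le)
    have "norm (z - 2 * om i) \<le> norm z + norm (2 * om i)" by (rule norm_triangle_ineq4)
    also have "\<dots> \<le> 5/2 * norm (om i)" using assms(2) w by (simp add: norm_mult)
    finally have "norm (z - 2 * om i) \<le> 5/2 * norm (om i)" .
    thus "norm z * norm (z - 2 * om i) \<le> R * (5/2 * norm (om i))"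
      using assms(2) R0 by (intro mult_mono) auto
    show "0 \<le> R * (5/2 * norm (om i))" using R0 by simp
    show "0 < norm (om i) ^ 2 * (norm (om i) / 2) ^ 2" using f by simp
    show "norm (om i) ^ 2 * (norm (om i) / 2) ^ 2 \<le> norm (om i) ^ 2 * norm (z - om i) ^ 2"
      using f by (intro mult_left_mono power_mono) auto
  qed
  also have "\<dots> = 10 * R / norm (om i) ^ 3"
    using f by (simp add: field_simps power3_eq_cube power2_eq_square)
  finally show ?thesis .
qed

lemma bound_h3:
  assumes "i \<in> Lg R" "norm z \<le> R"
  shows "norm (h3 i z) \<le> 16 / norm (om i) ^ 3"
proof -
  have w: "2 * R < norm (om i)" using Lg_big[OF assms(1)] .
  note f = far[OF assms(2) w]
  have "norm (h3 i z) = 2 / norm (z - om i) ^ 3"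
    by (simp add: h3_def norm_divide norm_power)
  also have "\<dots> \<le> 2 / (norm (om i) / 2) ^ 3"
    by (rule frac_le) (use f in \<open>auto intro!: power_mono\<close>)
  also have "\<dots> = 16 / norm (om i) ^ 3"
    by (simp add: field_simps power3_eq_cube)
  finally show ?thesis .
qed

lemma deriv_h0:
  assumes "i \<in> Lg R" "norm z \<le> R"
  shows "(h0 i has_field_derivative h1 i z) (at z)"
proof -
  have w: "2 * R < norm (om i)" using Lg_big[OF assms(1)] .
  note f = far[OF assms(2) w]
  have R0: "R \<ge> 0" using assms(2) norm_ge_zero order_trans by blast
  have ne: "z - om i \<noteq> 0" "om i \<noteq> 0" using f by auto
  have "norm z < norm (om i)" using assms(2) w R0 by linarith
  hence t: "norm (z / om i) < 1"
    using f by (simp add: norm_divide field_simps)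
  have "((\<lambda>z. g0 (z / om i)) has_field_derivative (- ((z / om i)\<^sup>2) / (1 - z / om i)) * (1 / om i)) (at z)"
    by (rule DERIV_chain2[where g = "\<lambda>z. z / om i" and x = z, OF g0_deriv[OF t]])
       (use ne in \<open>auto intro!: derivative_eq_intros\<close>)
  moreover have "(- ((z / om i)\<^sup>2) / (1 - z / om i)) * (1 / om i) = h1 i z"
  proof -
    have a: "1 - z / om i = - (z - om i) / om i" using ne by (simp add: field_simps)
    show ?thesis unfolding a h1_def using ne by (simp add: field_simps power2_eq_square)
  qed
  ultimately show ?thesis unfolding h0_def[abs_def] by simp
qed

lemma deriv_h1_aux:
  fixes w u :: complex assumes "u \<noteq> 0" "w \<noteq> 0"
  shows "((\<lambda>z. z\<^sup>2 / (w\<^sup>2 * (z - w))) has_field_derivative (1 / w\<^sup>2 - 1 / ((u + w) - w)\<^sup>2)) (at (u + w))"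
  using assms by (auto intro!: derivative_eq_intros simp: field_simps power2_eq_square)

lemma deriv_h2_aux:
  fixes w u :: complex assumes "u \<noteq> 0"
  shows "((\<lambda>z. 1 / w\<^sup>2 - 1 / (z - w)\<^sup>2) has_field_derivative (2 / ((u + w) - w) ^ 3)) (at (u + w))"
  using assms by (auto intro!: derivative_eq_intros simp: field_simps power2_eq_square power3_eq_cube)

lemma deriv_h1:
  assumes "z \<noteq> om i" "om i \<noteq> 0"
  shows "(h1 i has_field_derivative h2 i z) (at z)"
  using deriv_h1_aux[of "z - om i" "om i"] assms unfolding h1_def[abs_def] h2_def by simp

lemma deriv_h2:
  assumes "z \<noteq> om i"
  shows "(h2 i has_field_derivative h3 i z) (at z)"
  using deriv_h2_aux[of "z - om i" "om i"] assms unfolding h2_def[abs_def] h3_def by simp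

end


context wlat
begin

abbreviation sig where "sig \<equiv> wsigma w1 w2"
abbreviation pe where "pe \<equiv> wp w1 w2"

definition E :: "real \<Rightarrow> complex \<Rightarrow> complex" where "E R z = infsum (\<lambda>i. h0 i z) (Lg R)"
definition zeta :: "complex \<Rightarrow> complex" where "zeta z = 1 / z + infsum (\<lambda>i. h1 i z) I0"
definition pe0 :: "complex \<Rightarrow> complex" where "pe0 z = infsum (\<lambda>i. - h2 i z) I0"
definition dpe :: "complex \<Rightarrow> complex" where "dpe z = - 2 * infsum (\<lambda>i. 1 / (z - om i) ^ 3) UNIV"

lemma R_nonneg: "norm (z::complex) \<le> R \<Longrightarrow> R \<ge> 0"
  using norm_ge_zero order_trans by blast

lemma summ_h0: "norm z \<le> R \<Longrightarrow> (\<lambda>i. h0 i z) summable_on Lg R"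
  by (rule summ_bound[OF Lg_sub, where C = "2 * R ^ 3"]) (rule bound_h0)
lemma summ_h1: "norm z \<le> R \<Longrightarrow> (\<lambda>i. h1 i z) summable_on Lg R"
  by (rule summ_bound[OF Lg_sub, where C = "2 * R ^ 2"]) (rule bound_h1)
lemma summ_h2: "norm z \<le> R \<Longrightarrow> (\<lambda>i. h2 i z) summable_on Lg R"
  by (rule summ_bound[OF Lg_sub, where C = "10 * R"]) (rule bound_h2)
lemma summ_h3: "norm z \<le> R \<Longrightarrow> (\<lambda>i. h3 i z) summable_on Lg R"
  by (rule summ_bound[OF Lg_sub, where C = "16"]) (rule bound_h3)

lemma summ_I0:
  fixes f :: "int \<times> int \<Rightarrow> complex"
  assumes "\<And>R. norm z \<le> R \<Longrightarrow> f summable_on Lg R"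
  shows "f summable_on I0"
proof -
  have "f summable_on (Sm (norm z) \<union> Lg (norm z))"
    by (rule summable_on_union) (use assms finite_Sm in auto)
  thus ?thesis by (simp add: Sm_Lg_un)
qed

lemma split_I0:
  fixes f :: "int \<times> int \<Rightarrow> complex"
  assumes "f summable_on Lg R"
  shows "infsum f I0 = sum f (Sm R) + infsum f (Lg R)"
proof -
  have "infsum f (Sm R \<union> Lg R) = infsum f (Sm R) + infsum f (Lg R)"
    by (rule infsum_Un_disjoint) (use assms finite_Sm Sm_Lg_disj in auto)
  thus ?thesis by (simp add: Sm_Lg_un finite_Sm)
qed

lemma sI0_h1: "(\<lambda>i. h1 i z) summable_on I0" by (rule summ_I0) (rule summ_h1)
lemma sI0_h2: "(\<lambda>i. h2 i z) summable_on I0" by (rule summ_I0) (rule summ_h2)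
lemma sI0_h3: "(\<lambda>i. h3 i z) summable_on I0" by (rule summ_I0) (rule summ_h3)

lemma deriv_E:
  assumes "R > 0" "z \<in> ball 0 R"
  shows "(E R has_field_derivative infsum (\<lambda>i. h1 i z) (Lg R)) (at z)"
  unfolding E_def[abs_def]
  by (rule infsum_deriv[OF Lg_sub assms(1), where f = h0 and C = "2 * R ^ 3" and f' = h1 and C' = "2 * R ^ 2", OF bound_h0 _ deriv_h0 assms(2)])
     (auto intro: bound_h1)

lemma deriv_Z:
  assumes "R > 0" "z \<in> ball 0 R"
  shows "((\<lambda>z. infsum (\<lambda>i. h1 i z) (Lg R)) has_field_derivative infsum (\<lambda>i. h2 i z) (Lg R)) (at z)"
proof (rule infsum_deriv[OF Lg_sub assms(1), where f = h1 and C = "2 * R ^ 2" and f' = h2 and C' = "10 * R", OF bound_h1 _ _ assms(2)])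
  fix i u assume iu: "i \<in> Lg R" "u \<in> cball (0::complex) R"
  have f: "norm (u - om i) > 0" "norm (om i) > 0" using far[OF _ Lg_big[OF iu(1)], of u] iu(2) by auto
  show "(h1 i has_field_derivative h2 i u) (at u)" by (rule deriv_h1) (use f in auto)
qed (auto intro: bound_h2)

lemma deriv_P:
  assumes "R > 0" "z \<in> ball 0 R"
  shows "((\<lambda>z. infsum (\<lambda>i. h2 i z) (Lg R)) has_field_derivative infsum (\<lambda>i. h3 i z) (Lg R)) (at z)"
proof (rule infsum_deriv[OF Lg_sub assms(1), where f = h2 and C = "10 * R" and f' = h3 and C' = 16, OF bound_h2 _ _ assms(2)])
  fix i u assume iu: "i \<in> Lg R" "u \<in> cball (0::complex) R"
  have f: "norm (u - om i) > 0" using far[OF _ Lg_big[OF iu(1)], of u] iu(2) by auto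
  show "(h2 i has_field_derivative h3 i u) (at u)" by (rule deriv_h2) (use f in auto)
qed (auto intro: bound_h3)

lemma phi_deriv: "(phi has_field_derivative (- (t\<^sup>2) * exp (t + t\<^sup>2 / 2))) (at t)"
  unfolding phi_def[abs_def] by (auto intro!: derivative_eq_intros simp: algebra_simps power2_eq_square)

lemma phi_alg:
  fixes u w :: complex assumes "u \<noteq> 0" "w \<noteq> 0"
  shows "- (((u + w) / w)\<^sup>2) * (1 / w) = (1 - (u + w) / w) * ((u + w)\<^sup>2 / (w\<^sup>2 * ((u + w) - w)))"
  using assms by (simp add: field_simps power2_eq_square)

lemma deriv_phi:
  assumes "z \<noteq> om i" "om i \<noteq> 0"
  shows "((\<lambda>z. phi (z / om i)) has_field_derivative phi (z / om i) * h1 i z) (at z)"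
proof -
  have d: "((\<lambda>z. phi (z / om i)) has_field_derivative (- ((z / om i)\<^sup>2) * exp (z / om i + (z / om i)\<^sup>2 / 2)) * (1 / om i)) (at z)"
    by (rule DERIV_chain2[where g = "\<lambda>z. z / om i" and x = z, OF phi_deriv])
       (use assms in \<open>auto intro!: derivative_eq_intros\<close>)
  have a: "- ((z / om i)\<^sup>2) * (1 / om i) = (1 - z / om i) * h1 i z"
    using phi_alg[of "z - om i" "om i"] assms unfolding h1_def by simp
  have "(- ((z / om i)\<^sup>2) * exp (z / om i + (z / om i)\<^sup>2 / 2)) * (1 / om i) =
      (- ((z / om i)\<^sup>2) * (1 / om i)) * exp (z / om i + (z / om i)\<^sup>2 / 2)"
    by (simp only: mult_ac)
  also have "\<dots> = phi (z / om i) * h1 i z"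
    unfolding a phi_def by (simp only: mult_ac)
  finally have "(- ((z / om i)\<^sup>2) * exp (z / om i + (z / om i)\<^sup>2 / 2)) * (1 / om i) = phi (z / om i) * h1 i z" .
  with d show ?thesis by simp
qed

lemma phi_nz: "t \<noteq> 1 \<Longrightarrow> phi t \<noteq> 0"
  by (simp add: phi_def)

lemma om_in_Lam: "om i \<in> Lam" by (simp add: Lam_def)
lemma zero_in_Lam: "0 \<in> Lam" using om_in_Lam[of "(0,0)"] by (simp add: lat_pt_def)

lemma sigma_tendsto_rep:
  assumes R: "R > 0" and z: "norm z \<le> R"
  shows "(\<lambda>N. z * (\<Prod>i\<in>lat_box N. phi (z / om i))) \<longlonglongrightarrow> z * (\<Prod>i\<in>Sm R. phi (z / om i)) * exp (E R z)"
proof -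
  have eqf: "(\<lambda>(m,n). let w = lat_pt w1 w2 m n in (1 - z / w) * exp (z / w + z\<^sup>2 / (2 * w\<^sup>2))) = (\<lambda>i. phi (z / om i))"
    by (auto simp: fun_eq_iff phi_def Let_def power_divide mult.commute)
  obtain N0 where N0: "Sm R \<subseteq> lat_box N0"
    using finite_in_box[OF finite_Sm, of R] by (auto simp: Sm_def)
  have hs: "((\<lambda>i. h0 i z) has_sum E R z) (Lg R)"
    unfolding E_def by (rule has_sum_infsum[OF summ_h0[OF z]])
  have t: "(\<lambda>N. z * (\<Prod>i\<in>Sm R. phi (z / om i)) * exp (\<Sum>i\<in>Lg R \<inter> lat_box N. h0 i z))
      \<longlonglongrightarrow> z * (\<Prod>i\<in>Sm R. phi (z / om i)) * exp (E R z)"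
    by (intro tendsto_intros box_tendsto[OF hs Lg_sub])
  have ev: "\<forall>\<^sub>F N in sequentially. z * (\<Prod>i\<in>Sm R. phi (z / om i)) * exp (\<Sum>i\<in>Lg R \<inter> lat_box N. h0 i z)
      = z * (\<Prod>i\<in>lat_box N. phi (z / om i))"
    using eventually_ge_at_top[of N0]
  proof eventually_elim
    case (elim N)
    have sub: "Sm R \<subseteq> lat_box N" using N0 lat_box_mono[OF elim] by auto
    have un: "lat_box N = Sm R \<union> (Lg R \<inter> lat_box N)"
      using sub lat_box_I0[of N] Sm_Lg_un[of R] by auto
    have dj: "Sm R \<inter> (Lg R \<inter> lat_box N) = {}" using Sm_Lg_disj[of R] by auto
    have fin: "finite (Lg R \<inter> lat_box N)" using finite_lat_box by auto
    have "exp (\<Sum>i\<in>Lg R \<inter> lat_box N. h0 i z) = (\<Prod>i\<in>Lg R \<inter> lat_box N. exp (h0 i z))"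
      by (rule exp_sum[OF fin])
    also have "\<dots> = (\<Prod>i\<in>Lg R \<inter> lat_box N. phi (z / om i))"
    proof (rule prod.cong[OF refl])
      fix i assume "i \<in> Lg R \<inter> lat_box N"
      hence w: "2 * R < norm (om i)" using Lg_big by auto
      note f = far[OF z w]
      have "norm z < norm (om i)" using z w R by linarith
      hence "norm (z / om i) < 1" using f by (simp add: norm_divide field_simps)
      thus "exp (h0 i z) = phi (z / om i)" by (simp add: h0_def phi_exp)
    qed
    finally have "exp (\<Sum>i\<in>Lg R \<inter> lat_box N. h0 i z) = (\<Prod>i\<in>Lg R \<inter> lat_box N. phi (z / om i))" .
    moreover have "(\<Prod>i\<in>lat_box N. phi (z / om i)) = (\<Prod>i\<in>Sm R. phi (z / om i)) * (\<Prod>i\<in>Lg R \<inter> lat_box N. phi (z / om i))"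
      by (subst un, rule prod.union_disjoint) (use finite_Sm fin dj in auto)
    ultimately show ?case by (simp add: mult.assoc)
  qed
  show ?thesis by (rule Lim_transform_eventually[OF t ev])
qed

lemma sig_eq_lim: "sig z = lim (\<lambda>N. z * (\<Prod>i\<in>lat_box N. phi (z / om i)))"
proof -
  have eqf: "(\<lambda>(m,n). let w = lat_pt w1 w2 m n in (1 - z / w) * exp (z / w + z\<^sup>2 / (2 * w\<^sup>2))) = (\<lambda>i. phi (z / om i))"
    by (auto simp: fun_eq_iff phi_def Let_def power_divide mult.commute)
  show ?thesis unfolding wsigma_def eqf ..
qed

lemma sigma_rep:
  assumes R: "R > 0" and z: "norm z \<le> R"
  shows "sig z = z * (\<Prod>i\<in>Sm R. phi (z / om i)) * exp (E R z)"
  unfolding sig_eq_lim by (rule limI[OF sigma_tendsto_rep[OF assms]])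

lemma sig_tendsto: "(\<lambda>N. z * (\<Prod>i\<in>lat_box N. phi (z / om i))) \<longlonglongrightarrow> sig z"
proof -
  have R: "norm z + 1 > 0" by (rule add_nonneg_pos) auto
  show ?thesis using sigma_tendsto_rep[OF R, of z] sigma_rep[OF R, of z] by simp
qed

lemma wp_rep: "pe z = 1 / z\<^sup>2 + pe0 z"
proof -
  have eqf: "(\<lambda>(m,n). let w = lat_pt w1 w2 m n in 1 / (z - w)\<^sup>2 - 1 / w\<^sup>2) = (\<lambda>i. - h2 i z)"
    by (auto simp: fun_eq_iff h2_def Let_def)
  have hs: "((\<lambda>i. - h2 i z) has_sum pe0 z) I0"
    unfolding pe0_def by (rule has_sum_infsum) (simp add: summable_on_uminus sI0_h2)
  have "(\<lambda>N. \<Sum>i\<in>I0 \<inter> lat_box N. - h2 i z) \<longlonglongrightarrow> pe0 z"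
    by (rule box_tendsto[OF hs]) simp
  moreover have "I0 \<inter> lat_box N = lat_box N" for N using lat_box_I0 by auto
  ultimately have "lim (\<lambda>N. \<Sum>i\<in>lat_box N. - h2 i z) = pe0 z" by (intro limI) simp
  thus ?thesis unfolding wp_def eqf by simp
qed

lemma notin_Lam: "z \<notin> Lam \<Longrightarrow> z \<noteq> om i" "z \<notin> Lam \<Longrightarrow> z \<noteq> 0"
  using om_in_Lam zero_in_Lam by auto

lemma sig_deriv:
  assumes z: "z \<notin> Lam"
  shows "(sig has_field_derivative sig z * zeta z) (at z)"
proof -
  define R where "R = norm z + 1"
  have R: "R > 0" unfolding R_def by (rule add_nonneg_pos) auto
  have zR: "z \<in> ball 0 R" and zR': "norm z \<le> R" by (auto simp: R_def)
  have z0: "z \<noteq> 0" using notin_Lam(2)[OF z] .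
  define Pr where "Pr u = (\<Prod>i\<in>Sm R. phi (u / om i))" for u
  define S1 where "S1 = (\<Sum>i\<in>Sm R. h1 i z)"
  define EL where "EL = infsum (\<lambda>i. h1 i z) (Lg R)"
  have omnz: "i \<in> Sm R \<Longrightarrow> om i \<noteq> 0" for i by (simp add: Sm_def om_nz)
  have dP0: "((\<lambda>u. \<Prod>i\<in>Sm R. phi (u / om i)) has_field_derivative
      (\<Prod>i\<in>Sm R. phi (z / om i)) * (\<Sum>i\<in>Sm R. (phi (z / om i) * h1 i z) / phi (z / om i))) (at z)"
    by (rule has_field_derivative_prod') (use omnz notin_Lam(1)[OF z] in \<open>auto intro!: phi_nz deriv_phi\<close>)
  have "(\<Sum>i\<in>Sm R. (phi (z / om i) * h1 i z) / phi (z / om i)) = S1"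
    unfolding S1_def
  proof (rule sum.cong[OF refl])
    fix i assume "i \<in> Sm R"
    hence "phi (z / om i) \<noteq> 0" using omnz notin_Lam(1)[OF z, of i] by (intro phi_nz) auto
    thus "phi (z / om i) * h1 i z / phi (z / om i) = h1 i z" by simp
  qed
  with dP0 have dP: "(Pr has_field_derivative Pr z * S1) (at z)" by (simp add: Pr_def[abs_def])
  have dE: "(E R has_field_derivative EL) (at z)" unfolding EL_def by (rule deriv_E[OF R zR])
  have dF: "((\<lambda>u. u * Pr u * exp (E R u)) has_field_derivative
      (Pr z + z * (Pr z * S1)) * exp (E R z) + z * Pr z * (exp (E R z) * EL)) (at z)"
    using dP dE by (auto intro!: derivative_eq_intros simp: algebra_simps)
  have zeq: "zeta z = 1 / z + S1 + EL"
    unfolding zeta_def S1_def EL_def using split_I0[OF summ_h1[OF zR']] by simp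
  have sz: "sig z = z * Pr z * exp (E R z)" unfolding Pr_def by (rule sigma_rep[OF R zR'])
  have "(Pr z + z * (Pr z * S1)) * exp (E R z) + z * Pr z * (exp (E R z) * EL) = sig z * zeta z"
    unfolding sz zeq using z0 by (simp add: field_simps)
  with dF have dF': "((\<lambda>u. u * Pr u * exp (E R u)) has_field_derivative sig z * zeta z) (at z)" by simp
  show ?thesis
  proof (rule has_field_derivative_transform_within_open[OF dF' _ zR])
    fix u :: complex assume "u \<in> ball 0 R"
    thus "u * Pr u * exp (E R u) = sig u" unfolding Pr_def by (intro sigma_rep[symmetric] R) auto
  qed simp
qed

lemma sig_holo_ball:
  assumes R: "R > 0"
  shows "sig holomorphic_on ball 0 R"
proof -
  have hE: "E R holomorphic_on ball 0 R"
    unfolding holomorphic_on_open[OF open_ball] using deriv_E[OF R] by blast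
  have "(\<lambda>u. u * (\<Prod>i\<in>Sm R. phi (u / om i)) * exp (E R u)) holomorphic_on ball 0 R"
    unfolding phi_def by (intro holomorphic_intros hE) (auto simp: Sm_def om_nz)
  thus ?thesis
    by (rule holomorphic_transform) (use R in \<open>auto intro!: sigma_rep[symmetric]\<close>)
qed

lemma sig_holo: "sig holomorphic_on UNIV"
proof -
  have "sig field_differentiable (at z)" for z
  proof -
    have "sig holomorphic_on ball 0 (norm z + 1)" by (rule sig_holo_ball) (rule add_nonneg_pos, auto)
    thus ?thesis by (rule holomorphic_on_imp_differentiable_at) auto
  qed
  thus ?thesis by (simp add: holomorphic_on_def field_differentiable_at_within)
qed

lemma sig_nz:
  assumes z: "z \<notin> Lam"
  shows "sig z \<noteq> 0"
proof -
  define R where "R = norm z + 1"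
  have R: "R > 0" unfolding R_def by (rule add_nonneg_pos) auto
  have zR': "norm z \<le> R" by (auto simp: R_def)
  have "\<forall>i\<in>Sm R. phi (z / om i) \<noteq> 0"
  proof
    fix i assume "i \<in> Sm R"
    hence "om i \<noteq> 0" by (simp add: Sm_def om_nz)
    thus "phi (z / om i) \<noteq> 0" using notin_Lam(1)[OF z, of i] by (intro phi_nz) auto
  qed
  thus ?thesis using sigma_rep[OF R zR'] notin_Lam(2)[OF z] finite_Sm by simp
qed

lemma sig_0: "sig 0 = 0"
  by (simp add: wsigma_def)

lemma zeta_deriv:
  assumes z: "z \<notin> Lam"
  shows "(zeta has_field_derivative - pe z) (at z)"
proof -
  define R where "R = norm z + 1"
  have R: "R > 0" unfolding R_def by (rule add_nonneg_pos) auto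
  have zR: "z \<in> ball 0 R" and zR': "norm z \<le> R" by (auto simp: R_def)
  have z0: "z \<noteq> 0" using notin_Lam(2)[OF z] .
  have omnz: "i \<in> Sm R \<Longrightarrow> om i \<noteq> 0" for i by (simp add: Sm_def om_nz)
  have d: "((\<lambda>u. 1 / u + (\<Sum>i\<in>Sm R. h1 i u) + infsum (\<lambda>i. h1 i u) (Lg R)) has_field_derivative
      - 1 / z\<^sup>2 + (\<Sum>i\<in>Sm R. h2 i z) + infsum (\<lambda>i. h2 i z) (Lg R)) (at z)"
    using z0 omnz notin_Lam(1)[OF z] deriv_Z[OF R zR]
    by (auto intro!: derivative_eq_intros DERIV_sum deriv_h1 simp: power2_eq_square)
  have "- 1 / z\<^sup>2 + (\<Sum>i\<in>Sm R. h2 i z) + infsum (\<lambda>i. h2 i z) (Lg R) = - 1 / z\<^sup>2 + infsum (\<lambda>i. h2 i z) I0"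
    using split_I0[OF summ_h2[OF zR']] by simp
  also have "\<dots> = - pe z" by (simp add: wp_rep pe0_def infsum_uminus)
  finally have d': "((\<lambda>u. 1 / u + (\<Sum>i\<in>Sm R. h1 i u) + infsum (\<lambda>i. h1 i u) (Lg R)) has_field_derivative - pe z) (at z)"
    using d by simp
  show ?thesis
  proof (rule has_field_derivative_transform_within_open[OF d' _ zR])
    fix u :: complex assume "u \<in> ball 0 R"
    hence "norm u \<le> R" by simp
    thus "1 / u + (\<Sum>i\<in>Sm R. h1 i u) + infsum (\<lambda>i. h1 i u) (Lg R) = zeta u"
      unfolding zeta_def using split_I0[OF summ_h1] by (simp add: add.assoc)
  qed simp
qed

lemma pe0_deriv:
  assumes z: "\<And>i. i \<in> I0 \<Longrightarrow> z \<noteq> om i"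
  shows "(pe0 has_field_derivative - infsum (\<lambda>i. h3 i z) I0) (at z)"
proof -
  define R where "R = norm z + 1"
  have R: "R > 0" unfolding R_def by (rule add_nonneg_pos) auto
  have zR: "z \<in> ball 0 R" and zR': "norm z \<le> R" by (auto simp: R_def)
  have SI: "Sm R \<subseteq> I0" by (auto simp: Sm_def)
  have d: "((\<lambda>u. - ((\<Sum>i\<in>Sm R. h2 i u) + infsum (\<lambda>i. h2 i u) (Lg R))) has_field_derivative
      - ((\<Sum>i\<in>Sm R. h3 i z) + infsum (\<lambda>i. h3 i z) (Lg R))) (at z)"
    using z SI deriv_P[OF R zR]
    by (auto intro!: derivative_eq_intros DERIV_sum deriv_h2)
  have "- ((\<Sum>i\<in>Sm R. h3 i z) + infsum (\<lambda>i. h3 i z) (Lg R)) = - infsum (\<lambda>i. h3 i z) I0"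
    using split_I0[OF summ_h3[OF zR']] by simp
  with d have d': "((\<lambda>u. - ((\<Sum>i\<in>Sm R. h2 i u) + infsum (\<lambda>i. h2 i u) (Lg R))) has_field_derivative
      - infsum (\<lambda>i. h3 i z) I0) (at z)" by simp
  show ?thesis
  proof (rule has_field_derivative_transform_within_open[OF d' _ zR])
    fix u :: complex assume "u \<in> ball 0 R"
    hence "norm u \<le> R" by simp
    thus "- ((\<Sum>i\<in>Sm R. h2 i u) + infsum (\<lambda>i. h2 i u) (Lg R)) = pe0 u"
      unfolding pe0_def using split_I0[OF summ_h2] by (simp add: infsum_uminus)
  qed simp
qed

lemma dpe_eq: "dpe z = - 2 / z ^ 3 - infsum (\<lambda>i. h3 i z) I0"
proof -
  have e: "(\<lambda>i. h3 i z) = (\<lambda>i. 2 * (1 / (z - om i) ^ 3))" by (simp add: h3_def fun_eq_iff)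
  have s: "(\<lambda>i. 1 / (z - om i) ^ 3) summable_on I0"
  proof -
    have "(\<lambda>i. 1/2 * h3 i z) summable_on I0" by (intro summable_on_cmult_right sI0_h3)
    thus ?thesis by (simp add: h3_def)
  qed
  have U: "UNIV = insert (0,0) I0" by (auto simp: I0_def)
  have "infsum (\<lambda>i. 1 / (z - om i) ^ 3) UNIV = 1 / z ^ 3 + infsum (\<lambda>i. 1 / (z - om i) ^ 3) I0"
    by (subst U, subst infsum_insert[OF s]) (auto simp: I0_def lat_pt_def)
  moreover have "infsum (\<lambda>i. h3 i z) I0 = 2 * infsum (\<lambda>i. 1 / (z - om i) ^ 3) I0"
    unfolding e by (rule infsum_cmult_right) (use s in auto)
  ultimately show ?thesis by (simp add: dpe_def algebra_simps)
qed

lemma pe_deriv: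
  assumes z: "z \<notin> Lam"
  shows "(pe has_field_derivative dpe z) (at z)"
proof -
  have z0: "z \<noteq> 0" using notin_Lam(2)[OF z] .
  have d: "((\<lambda>u. 1 / u\<^sup>2 + pe0 u) has_field_derivative - 2 / z ^ 3 - infsum (\<lambda>i. h3 i z) I0) (at z)"
    using z0 pe0_deriv[of z] notin_Lam(1)[OF z]
    by (auto intro!: derivative_eq_intros simp: power2_eq_square power3_eq_cube field_simps)
  show ?thesis using d unfolding dpe_eq[symmetric] by (simp add: wp_rep[abs_def])
qed

end


context wlat
begin

definition ng :: "int \<times> int \<Rightarrow> int \<times> int" where "ng i = (- fst i, - snd i)"
definition sh :: "int \<times> int \<Rightarrow> int \<times> int \<Rightarrow> int \<times> int" where "sh k i = (fst i + fst k, snd i + snd k)"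

lemma om_ng: "om (ng i) = - om i" by (simp add: ng_def lat_pt_def algebra_simps)
lemma om_sh: "om (sh k i) = om i + om k" by (simp add: sh_def lat_pt_def algebra_simps)

lemma bij_ng_box: "bij_betw ng (lat_box N) (lat_box N)"
  by (rule bij_betw_byWitness[where f' = ng]) (auto simp: ng_def lat_box_def)

lemma bij_sh: "bij_betw (sh k) UNIV UNIV"
  by (rule bij_betw_byWitness[where f' = "sh (- fst k, - snd k)"]) (auto simp: sh_def)

lemma sig_odd: "sig (- z) = - sig z"
proof -
  have "(\<lambda>N. (- z) * (\<Prod>i\<in>lat_box N. phi ((- z) / om i))) = (\<lambda>N. - (z * (\<Prod>i\<in>lat_box N. phi (z / om i))))"
  proof
    fix N
    have "(\<Prod>i\<in>lat_box N. phi ((- z) / om i)) = (\<Prod>i\<in>lat_box N. phi ((- z) / om (ng i)))"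
      by (rule prod.reindex_bij_betw[OF bij_ng_box, symmetric])
    also have "\<dots> = (\<Prod>i\<in>lat_box N. phi (z / om i))" by (simp add: om_ng)
    finally show "(- z) * (\<Prod>i\<in>lat_box N. phi ((- z) / om i)) = - (z * (\<Prod>i\<in>lat_box N. phi (z / om i)))" by simp
  qed
  moreover have "(\<lambda>N. - (z * (\<Prod>i\<in>lat_box N. phi (z / om i)))) \<longlonglongrightarrow> - sig z"
    by (intro tendsto_minus sig_tendsto)
  ultimately have "(\<lambda>N. (- z) * (\<Prod>i\<in>lat_box N. phi ((- z) / om i))) \<longlonglongrightarrow> - sig z" by simp
  moreover have "(\<lambda>N. (- z) * (\<Prod>i\<in>lat_box N. phi ((- z) / om i))) \<longlonglongrightarrow> sig (- z)" by (rule sig_tendsto)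
  ultimately show ?thesis using LIMSEQ_unique by blast
qed

lemma pe_even: "pe (- z) = pe z"
proof -
  have "(\<Sum>(m, n)\<in>lat_box N. (let w = lat_pt w1 w2 m n in 1 / (- z - w)\<^sup>2 - 1 / w\<^sup>2)) =
        (\<Sum>(m, n)\<in>lat_box N. (let w = lat_pt w1 w2 m n in 1 / (z - w)\<^sup>2 - 1 / w\<^sup>2))" for N
  proof -
    have e: "(\<lambda>(m, n). let w = lat_pt w1 w2 m n in 1 / (u - w)\<^sup>2 - 1 / w\<^sup>2) = (\<lambda>i. 1 / (u - om i)\<^sup>2 - 1 / (om i)\<^sup>2)" for u
      by (auto simp: fun_eq_iff Let_def)
    have "(\<Sum>i\<in>lat_box N. 1 / (- z - om i)\<^sup>2 - 1 / (om i)\<^sup>2) = (\<Sum>i\<in>lat_box N. 1 / (- z - om (ng i))\<^sup>2 - 1 / (om (ng i))\<^sup>2)"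
      by (rule sum.reindex_bij_betw[OF bij_ng_box, symmetric])
    also have "\<dots> = (\<Sum>i\<in>lat_box N. 1 / (z - om i)\<^sup>2 - 1 / (om i)\<^sup>2)"
    proof (rule sum.cong[OF refl])
      fix i
      have "(- z - om (ng i))\<^sup>2 = (z - om i)\<^sup>2" by (simp add: om_ng power2_eq_square algebra_simps)
      thus "1 / (- z - om (ng i))\<^sup>2 - 1 / (om (ng i))\<^sup>2 = 1 / (z - om i)\<^sup>2 - 1 / (om i)\<^sup>2" by (simp add: om_ng)
    qed
    finally show ?thesis unfolding e .
  qed
  thus ?thesis by (simp add: wp_def)
qed

lemma dpe_periodic: "dpe (z + om k) = dpe z"
proof -
  have "infsum (\<lambda>i. 1 / (z + om k - om i) ^ 3) UNIV = infsum (\<lambda>i. 1 / (z + om k - om (sh k i)) ^ 3) UNIV"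
    by (rule infsum_reindex_bij_betw[OF bij_sh, symmetric])
  also have "\<dots> = infsum (\<lambda>i. 1 / (z - om i) ^ 3) UNIV" by (simp add: om_sh)
  finally show ?thesis by (simp add: dpe_def)
qed

lemma Lam_shift: "z + om k \<in> Lam \<longleftrightarrow> z \<in> Lam"
proof
  assume "z + om k \<in> Lam"
  then obtain i where "z + om k = om i" by (auto simp: Lam_def)
  moreover have "om (sh (- fst k, - snd k) i) = om i - om k" by (simp add: sh_def lat_pt_def algebra_simps)
  ultimately have "z = om (sh (- fst k, - snd k) i)" by (metis add_diff_cancel)
  thus "z \<in> Lam" by (simp add: Lam_def)
next
  assume "z \<in> Lam"
  then obtain i where "z = om i" by (auto simp: Lam_def)
  hence "z + om k = om (sh k i)" by (simp add: om_sh)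
  thus "z + om k \<in> Lam" by (simp add: Lam_def)
qed

lemma Lam_neg: "- z \<in> Lam \<longleftrightarrow> z \<in> Lam"
proof
  assume "- z \<in> Lam"
  then obtain i where "- z = om i" by (auto simp: Lam_def)
  hence "z = om (ng i)" unfolding om_ng by (metis minus_minus)
  thus "z \<in> Lam" by (simp add: Lam_def)
next
  assume "z \<in> Lam"
  then obtain i where "z = om i" by (auto simp: Lam_def)
  hence "- z = om (ng i)" by (simp add: om_ng)
  thus "- z \<in> Lam" by (simp add: Lam_def)
qed

lemma Lam_dist: "x \<in> Lam \<Longrightarrow> y \<in> Lam \<Longrightarrow> x \<noteq> y \<Longrightarrow> dist x y \<ge> dl"
proof -
  assume "x \<in> Lam" "y \<in> Lam" "x \<noteq> y"
  then obtain i j where ij: "x = om i" "y = om j" by (auto simp: Lam_def)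
  define k where "k = sh (- fst j, - snd j) i"
  have "om k = om i - om j" by (simp add: k_def sh_def lat_pt_def algebra_simps)
  hence "om k = x - y" using ij by simp
  hence k0: "k \<noteq> (0,0)" using \<open>x \<noteq> y\<close> by (auto simp: lat_pt_def)
  have one: "(1::real) \<le> \<bar>real_of_int a\<bar>" if "a \<noteq> 0" for a :: int
  proof -
    have "1 \<le> \<bar>a\<bar>" using that by arith
    hence "real_of_int 1 \<le> real_of_int \<bar>a\<bar>" by (simp only: of_int_le_iff)
    thus ?thesis by simp
  qed
  have "fst k \<noteq> 0 \<or> snd k \<noteq> 0" using k0 by (cases k) auto
  hence "1 \<le> \<bar>real_of_int (fst k)\<bar> + \<bar>real_of_int (snd k)\<bar>"
    using one[of "fst k"] one[of "snd k"] by auto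
  hence "dl \<le> dl * (\<bar>real_of_int (fst k)\<bar> + \<bar>real_of_int (snd k)\<bar>)"
    using dl_pos by (simp add: mult_le_cancel_left1)
  also have "\<dots> \<le> norm (om k)" by (rule dl_le')
  finally show "dist x y \<ge> dl" using \<open>om k = x - y\<close> by (simp add: dist_norm)
qed

lemma closed_Lam: "closed Lam"
  by (rule discrete_imp_closed[OF dl_pos]) (use Lam_dist in \<open>force simp: dist_commute\<close>)

lemma countable_Lam: "countable Lam"
  unfolding Lam_def by simp

lemma open_S: "open (UNIV - Lam)"
  using closed_Lam by (simp add: open_Diff)

lemma conn_S: "connected (UNIV - Lam)"
  by (rule connected_open_diff_countable) (auto simp: countable_Lam)

lemma sig_Lam: "z \<in> Lam \<Longrightarrow> sig z = 0"
proof -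
  assume "z \<in> Lam"
  then obtain i where i: "z = om i" by (auto simp: Lam_def)
  show "sig z = 0"
  proof (cases "i = (0,0)")
    case True thus ?thesis using i sig_0 by (simp add: lat_pt_def)
  next
    case False
    define R where "R = norm z + 1"
    have R: "R > 0" unfolding R_def by (rule add_nonneg_pos) auto
    have zR: "norm z \<le> R" by (simp add: R_def)
    have iS: "i \<in> Sm R" using False i by (simp add: Sm_def I0_def R_def)
    have "om i \<noteq> 0" using False om_eq_0_iff by blast
    hence "phi (z / om i) = 0" using i by (simp add: phi_def)
    hence "(\<Prod>j\<in>Sm R. phi (z / om j)) = 0" using iS finite_Sm by (auto intro: prod_zero)
    thus ?thesis using sigma_rep[OF R zR] by simp
  qed
qed

end


lemma periodic_int:
  fixes f :: "complex \<Rightarrow> complex"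
  assumes f: "\<And>z. P z \<Longrightarrow> f (z + w) = f z" and P: "\<And>z. P (z + w) \<longleftrightarrow> P z" and z: "P z"
  shows "P (z + of_int n * w) \<and> f (z + of_int n * w) = f z"
proof (induction n rule: int_induct[where k = 0])
  case base thus ?case using z by simp
next
  case (step1 i)
  have e: "z + of_int (i + 1) * w = (z + of_int i * w) + w" by (simp add: algebra_simps)
  show ?case unfolding e using step1(2) f P by simp
next
  case (step2 i)
  have e: "z + of_int i * w = (z + of_int (i - 1) * w) + w" by (simp add: algebra_simps)
  have "P (z + of_int (i - 1) * w)" using step2(2) P unfolding e by simp
  thus ?case using step2(2) f[of "z + of_int (i - 1) * w"] unfolding e by simp
qed

context wlat
begin

lemma pe_holo_S: "pe field_differentiable (at z)" if "z \<notin> Lam" for z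
  using pe_deriv[OF that] field_differentiable_def by blast

lemma pe_shift_const: "\<exists>c. \<forall>z. z \<notin> Lam \<longrightarrow> pe (z + om k) - pe z = c"
proof -
  have cont: "continuous_on (UNIV - Lam) (\<lambda>z. pe (z + om k) - pe z)"
  proof (rule continuous_at_imp_continuous_on, rule ballI)
    fix z assume z: "z \<in> UNIV - Lam"
    hence z': "z + om k \<notin> Lam" using Lam_shift by auto
    have "((\<lambda>z. pe (z + om k)) has_field_derivative dpe (z + om k) * 1) (at z)"
      by (rule DERIV_chain2[where g = "\<lambda>z. z + om k" and x = z, OF pe_deriv[OF z']]) (auto intro!: derivative_eq_intros)
    hence "isCont (\<lambda>z. pe (z + om k)) z" by (rule DERIV_isCont)
    moreover have "isCont pe z" using DERIV_isCont[OF pe_deriv] z by auto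
    ultimately show "isCont (\<lambda>z. pe (z + om k) - pe z) z" by (intro continuous_intros)
  qed
  have der: "\<forall>z\<in>(UNIV - Lam) - {}. ((\<lambda>z. pe (z + om k) - pe z) has_field_derivative 0) (at z)"
  proof
    fix z assume z: "z \<in> (UNIV - Lam) - {}"
    hence z': "z + om k \<notin> Lam" and z0: "z \<notin> Lam" using Lam_shift by auto
    have "((\<lambda>z. pe (z + om k)) has_field_derivative dpe (z + om k) * 1) (at z)"
      by (rule DERIV_chain2[where g = "\<lambda>z. z + om k" and x = z, OF pe_deriv[OF z']]) (auto intro!: derivative_eq_intros)
    hence "((\<lambda>z. pe (z + om k) - pe z) has_field_derivative dpe (z + om k) * 1 - dpe z) (at z)"
      by (intro DERIV_diff pe_deriv z0)
    thus "((\<lambda>z. pe (z + om k) - pe z) has_field_derivative 0) (at z)" by (simp add: dpe_periodic)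
  qed
  obtain c where "\<And>z. z \<in> UNIV - Lam \<Longrightarrow> pe (z + om k) - pe z = c"
    using DERIV_zero_connected_constant[OF conn_S open_S finite.emptyI cont der] by blast
  thus ?thesis by blast
qed

lemma half_notin:
  assumes "k = (1,0) \<or> k = (0,1)"
  shows "- (om k / 2) \<notin> Lam"
proof
  assume "- (om k / 2) \<in> Lam"
  then obtain i where i: "- (om k / 2) = om i" by (auto simp: Lam_def)
  have "om (2 * fst i + fst k, 2 * snd i + snd k) = 2 * om i + om k"
    by (simp add: lat_pt_def algebra_simps)
  also have "\<dots> = 0"
  proof -
    have "om i = - (om k / 2)" using i by simp
    hence "2 * om i = - om k" by simp
    thus ?thesis by simp
  qed
  finally have "(2 * fst i + fst k, 2 * snd i + snd k) = (0, 0)" using om_eq_0_iff by blast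
  thus False using assms by auto presburger+
qed

lemma pe_periodic_basic:
  assumes "k = (1,0) \<or> k = (0,1)" "z \<notin> Lam"
  shows "pe (z + om k) = pe z"
proof -
  obtain c where c: "\<And>z. z \<notin> Lam \<Longrightarrow> pe (z + om k) - pe z = c" using pe_shift_const by blast
  have "c = pe (- (om k / 2) + om k) - pe (- (om k / 2))" using c[OF half_notin[OF assms(1)]] by simp
  also have "- (om k / 2) + om k = om k / 2" by simp
  also have "pe (om k / 2) - pe (- (om k / 2)) = 0" by (simp add: pe_even)
  finally show ?thesis using c[OF assms(2)] by simp
qed

lemma om_decomp: "om k = of_int (fst k) * om (1,0) + of_int (snd k) * om (0,1)"
  by (simp add: lat_pt_def algebra_simps)

lemma pe_periodic:
  assumes "z \<notin> Lam"
  shows "pe (z + om k) = pe z"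
proof -
  have P1: "\<And>z. (z + om (1,0) \<notin> Lam) \<longleftrightarrow> (z \<notin> Lam)" and P2: "\<And>z. (z + om (0,1) \<notin> Lam) \<longleftrightarrow> (z \<notin> Lam)"
    using Lam_shift by blast+
  have A: "(z + of_int (fst k) * om (1,0)) \<notin> Lam \<and> pe (z + of_int (fst k) * om (1,0)) = pe z"
    by (rule periodic_int[where P = "\<lambda>z. z \<notin> Lam"]) (use pe_periodic_basic P1 assms in auto)
  have B: "(z + of_int (fst k) * om (1,0)) + of_int (snd k) * om (0,1) \<notin> Lam \<and>
     pe ((z + of_int (fst k) * om (1,0)) + of_int (snd k) * om (0,1)) = pe (z + of_int (fst k) * om (1,0))"
    by (rule periodic_int[where P = "\<lambda>z. z \<notin> Lam"]) (use pe_periodic_basic P2 A in auto)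
  show ?thesis using A B by (simp add: om_decomp[of k] add.assoc)
qed

lemma zeta_shift_const: "\<exists>c. \<forall>z. z \<notin> Lam \<longrightarrow> zeta (z + om k) - zeta z = c"
proof -
  have dz: "((\<lambda>z. zeta (z + om k) - zeta z) has_field_derivative 0) (at z)" if z: "z \<notin> Lam" for z
  proof -
    have z': "z + om k \<notin> Lam" using z Lam_shift by auto
    have "((\<lambda>z. zeta (z + om k)) has_field_derivative - pe (z + om k) * 1) (at z)"
      by (rule DERIV_chain2[where g = "\<lambda>z. z + om k" and x = z, OF zeta_deriv[OF z']]) (auto intro!: derivative_eq_intros)
    hence "((\<lambda>z. zeta (z + om k) - zeta z) has_field_derivative - pe (z + om k) * 1 - (- pe z)) (at z)"
      by (intro DERIV_diff zeta_deriv z)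
    thus ?thesis by (simp add: pe_periodic[OF z])
  qed
  have cont: "continuous_on (UNIV - Lam) (\<lambda>z. zeta (z + om k) - zeta z)"
    by (rule continuous_at_imp_continuous_on, rule ballI, rule DERIV_isCont[OF dz]) auto
  obtain c where "\<And>z. z \<in> UNIV - Lam \<Longrightarrow> zeta (z + om k) - zeta z = c"
    using DERIV_zero_connected_constant[OF conn_S open_S finite.emptyI cont] dz by blast
  thus ?thesis by blast
qed

lemma some_notin: "- (om (1,0) / 2) \<notin> Lam"
  by (rule half_notin) simp

lemma sig_quasi: "\<exists>C \<eta>. C \<noteq> 0 \<and> (\<forall>z. sig (z + om k) = C * exp (\<eta> * z) * sig z)"
proof -
  obtain \<eta> where eta: "\<And>z. z \<notin> Lam \<Longrightarrow> zeta (z + om k) - zeta z = \<eta>" using zeta_shift_const by blast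
  define q where "q z = sig (z + om k) * exp (- (\<eta> * z)) / sig z" for z
  have dq: "(q has_field_derivative 0) (at z)" if z: "z \<notin> Lam" for z
  proof -
    have z': "z + om k \<notin> Lam" using z Lam_shift by auto
    have dA: "((\<lambda>z. sig (z + om k)) has_field_derivative sig (z + om k) * zeta (z + om k) * 1) (at z)"
      by (rule DERIV_chain2[where g = "\<lambda>z. z + om k" and x = z, OF sig_deriv[OF z']]) (auto intro!: derivative_eq_intros)
    have s0: "sig z \<noteq> 0" using sig_nz[OF z] .
    have ze: "zeta (z + om k) = zeta z + \<eta>" using eta[OF z] by (simp add: algebra_simps)
    show ?thesis unfolding q_def[abs_def]
      using dA sig_deriv[OF z] s0
      by (auto intro!: derivative_eq_intros simp: ze field_simps)
  qed
  have cont: "continuous_on (UNIV - Lam) q"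
    by (rule continuous_at_imp_continuous_on, rule ballI, rule DERIV_isCont[OF dq]) auto
  obtain C where C: "\<And>z. z \<in> UNIV - Lam \<Longrightarrow> q z = C"
    using DERIV_zero_connected_constant[OF conn_S open_S finite.emptyI cont] dq by blast
  have rel: "sig (z + om k) = C * exp (\<eta> * z) * sig z" for z
  proof (cases "z \<in> Lam")
    case True
    hence "z + om k \<in> Lam" using Lam_shift by auto
    thus ?thesis using True sig_Lam by simp
  next
    case False
    have "q z = C" using C False by auto
    hence "sig (z + om k) * exp (- (\<eta> * z)) = C * sig z" using sig_nz[OF False] by (simp add: q_def field_simps)
    hence "sig (z + om k) * exp (- (\<eta> * z)) * exp (\<eta> * z) = C * sig z * exp (\<eta> * z)" by simp
    thus ?thesis by (simp add: exp_minus field_simps)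
  qed
  have "C \<noteq> 0"
  proof
    assume "C = 0"
    define z0 where "z0 = - (om (1,0) / 2)"
    have z0: "z0 \<notin> Lam" unfolding z0_def by (rule some_notin)
    hence "z0 + om k \<notin> Lam" using Lam_shift by auto
    hence "sig (z0 + om k) \<noteq> 0" by (rule sig_nz)
    thus False using rel[of z0] \<open>C = 0\<close> by simp
  qed
  thus ?thesis using rel by blast
qed

end


context wlat
begin

lemma phi_0: "phi 0 = 1" by (simp add: phi_def)

lemma sig_deriv0: "(sig has_field_derivative 1) (at 0)"
proof -
  have R: "(1::real) > 0" by simp
  define Pr where "Pr u = (\<Prod>i\<in>Sm 1. phi (u / om i))" for u
  have omnz: "i \<in> Sm 1 \<Longrightarrow> om i \<noteq> 0" for i by (simp add: Sm_def om_nz)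
  have dP: "(Pr has_field_derivative (\<Sum>i\<in>Sm 1. (phi (0 / om i) * h1 i 0) * (\<Prod>j\<in>Sm 1 - {i}. phi (0 / om j)))) (at 0)"
    unfolding Pr_def[abs_def]
  proof (rule has_field_derivative_prod)
    fix i assume i: "i \<in> Sm 1"
    show "((\<lambda>u. phi (u / om i)) has_field_derivative phi (0 / om i) * h1 i 0) (at 0)"
      by (rule deriv_phi) (use omnz[OF i] in auto)
  qed
  have dE: "(E 1 has_field_derivative infsum (\<lambda>i. h1 i 0) (Lg 1)) (at 0)" by (rule deriv_E) auto
  have P0: "Pr 0 = 1" by (simp add: Pr_def phi_0)
  have E0: "E 1 0 = 0" by (simp add: E_def h0_def g0_0)
  have d: "((\<lambda>u. u * Pr u * exp (E 1 u)) has_field_derivative 1) (at 0)"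
    using dP dE by (auto intro!: derivative_eq_intros simp: P0 E0)
  show ?thesis
  proof (rule has_field_derivative_transform_within_open[OF d, of "ball 0 1"])
    fix u :: complex assume "u \<in> ball 0 1"
    thus "u * Pr u * exp (E 1 u) = sig u" unfolding Pr_def by (intro sigma_rep[symmetric]) auto
  qed auto
qed

definition ee :: "complex \<Rightarrow> complex" where "ee u = (if u = 0 then 1 else sig u / u)"

lemma ee_holo: "ee holomorphic_on UNIV"
proof -
  have "(\<lambda>z. if z = 0 then deriv sig 0 else (sig z - sig 0) / (z - 0)) holomorphic_on UNIV"
    by (rule pole_lemma[OF sig_holo]) simp
  moreover have "deriv sig 0 = 1" by (rule DERIV_imp_deriv[OF sig_deriv0])
  hence "(\<lambda>z. if z = 0 then deriv sig 0 else (sig z - sig 0) / (z - 0)) = ee"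
    by (intro ext) (simp add: ee_def sig_0)
  ultimately show ?thesis by simp
qed

lemma ee_0: "ee 0 = 1" by (simp add: ee_def)
lemma sig_ee: "sig u = u * ee u" by (cases "u = 0") (auto simp: ee_def sig_0)
lemma ee_even: "ee (- u) = ee u" by (cases "u = 0") (auto simp: ee_def sig_odd)

lemma even_deriv0:
  fixes n :: "complex \<Rightarrow> complex"
  assumes "n holomorphic_on UNIV" "\<And>u. n (- u) = n u"
  shows "deriv n 0 = 0"
proof -
  have d: "(n has_field_derivative deriv n 0) (at 0)"
    using assms(1) by (intro DERIV_deriv_iff_field_differentiable[THEN iffD2]) (auto simp: holomorphic_on_def field_differentiable_at_within intro: holomorphic_on_imp_differentiable_at)
  have "((\<lambda>u. n (- u)) has_field_derivative deriv n 0 * (- 1)) (at 0)"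
    by (rule DERIV_chain2[where g = "\<lambda>u. - u" and x = 0]) (use d in \<open>auto intro!: derivative_eq_intros\<close>)
  hence "(n has_field_derivative - deriv n 0) (at 0)" using assms(2) by simp
  hence "deriv n 0 = - deriv n 0" using d DERIV_unique by blast
  thus ?thesis by simp
qed

lemma sig_holo_comp: "f holomorphic_on S \<Longrightarrow> (\<lambda>u. sig (f u)) holomorphic_on S"
  using holomorphic_on_compose[of f S sig] holomorphic_on_subset[OF sig_holo] by (auto simp: o_def)

lemma ee_holo_comp: "f holomorphic_on S \<Longrightarrow> (\<lambda>u. ee (f u)) holomorphic_on S"
  using holomorphic_on_compose[of f S ee] holomorphic_on_subset[OF ee_holo] by (auto simp: o_def)

definition nn :: "complex \<Rightarrow> complex \<Rightarrow> complex" where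
  "nn v u = (ee u)\<^sup>2 * (sig v)\<^sup>2 + sig (u + v) * sig (u - v)"

definition Phi :: "complex \<Rightarrow> complex \<Rightarrow> complex" where
  "Phi v u = pe u - pe v + sig (u + v) * sig (u - v) / ((sig u)\<^sup>2 * (sig v)\<^sup>2)"

lemma nn_holo: "nn v holomorphic_on UNIV"
  unfolding nn_def[abs_def] by (intro holomorphic_intros sig_holo_comp ee_holo_comp)

lemma nn_even: "nn v (- u) = nn v u"
proof -
  have "sig (- u + v) * sig (- u - v) = sig (u + v) * sig (u - v)"
    using sig_odd[of "u - v"] sig_odd[of "u + v"] by (simp add: algebra_simps)
  thus ?thesis by (simp add: nn_def ee_even)
qed

lemma nn_0: "nn v 0 = 0"
  by (simp add: nn_def ee_0 sig_odd power2_eq_square)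

definition n1 :: "complex \<Rightarrow> complex \<Rightarrow> complex" where
  "n1 v = (\<lambda>z. if z = 0 then deriv (nn v) 0 else (nn v z - nn v 0) / (z - 0))"
definition n2 :: "complex \<Rightarrow> complex \<Rightarrow> complex" where
  "n2 v = (\<lambda>z. if z = 0 then deriv (n1 v) 0 else (n1 v z - n1 v 0) / (z - 0))"

lemma n1_holo: "n1 v holomorphic_on UNIV"
  unfolding n1_def by (rule pole_lemma[OF nn_holo]) simp

lemma n2_holo: "n2 v holomorphic_on UNIV"
  unfolding n2_def by (rule pole_lemma[OF n1_holo]) simp

lemma n2_eq: "z \<noteq> 0 \<Longrightarrow> n2 v z = nn v z / z\<^sup>2"
proof -
  assume z: "z \<noteq> 0"
  have "n1 v 0 = 0" unfolding n1_def by (simp add: even_deriv0[OF nn_holo nn_even])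
  thus ?thesis using z by (simp add: n2_def n1_def nn_0 power2_eq_square)
qed

definition GG :: "complex \<Rightarrow> complex \<Rightarrow> complex" where
  "GG v u = pe0 u - pe v + n2 v u / ((ee u)\<^sup>2 * (sig v)\<^sup>2)"

lemma holo_isCont: "f holomorphic_on UNIV \<Longrightarrow> isCont f z"
  by (meson UNIV_I continuous_on_eq_continuous_at holomorphic_on_imp_continuous_on open_UNIV)

lemma GG_cont:
  assumes v: "v \<notin> Lam"
  shows "isCont (GG v) 0"
proof -
  have c1: "isCont pe0 0"
    by (rule DERIV_isCont[OF pe0_deriv]) (use om_nz in force)
  have c2: "isCont (n2 v) 0" by (rule holo_isCont[OF n2_holo])
  have c3: "isCont ee 0" by (rule holo_isCont[OF ee_holo])
  have nz: "(ee 0)\<^sup>2 * (sig v)\<^sup>2 \<noteq> 0" using sig_nz[OF v] by (simp add: ee_0)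
  show ?thesis unfolding GG_def[abs_def] using c1 c2 c3 nz by (intro continuous_intros) auto
qed

lemma Phi_GG:
  assumes "u \<noteq> 0" "ee u \<noteq> 0" "v \<notin> Lam"
  shows "Phi v u = GG v u"
proof -
  have sv: "sig v \<noteq> 0" using sig_nz[OF assms(3)] .
  have "Phi v u = 1 / u\<^sup>2 + pe0 u - pe v + sig (u + v) * sig (u - v) / ((u * ee u)\<^sup>2 * (sig v)\<^sup>2)"
    by (simp add: Phi_def wp_rep sig_ee[of u])
  also have "\<dots> = pe0 u - pe v + nn v u / u\<^sup>2 / ((ee u)\<^sup>2 * (sig v)\<^sup>2)"
    using assms sv by (simp add: nn_def field_simps)
  also have "\<dots> = GG v u" by (simp add: GG_def n2_eq[OF assms(1)])
  finally show ?thesis .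
qed

lemma Phi_tendsto0:
  assumes v: "v \<notin> Lam"
  shows "(Phi v \<longlongrightarrow> GG v 0) (at 0)"
proof -
  have t: "(GG v \<longlongrightarrow> GG v 0) (at 0)" using GG_cont[OF v] by (simp add: isCont_def)
  have "isCont ee 0" by (rule holo_isCont[OF ee_holo])
  hence "\<forall>\<^sub>F u in at 0. ee u \<noteq> 0"
    using ee_0 by (metis continuous_at_avoid eventually_at_topological zero_neq_one isCont_def tendsto_imp_eventually_ne)
  moreover have "\<forall>\<^sub>F u in at 0. u \<noteq> (0::complex)" by (simp add: eventually_at_filter)
  ultimately have "\<forall>\<^sub>F u in at 0. GG v u = Phi v u"
    by eventually_elim (use Phi_GG v in auto)
  thus ?thesis using Lim_transform_eventually[OF t] by blast
qed

lemma Phi_periodic: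
  assumes u: "u \<notin> Lam" and v: "v \<notin> Lam"
  shows "Phi v (u + om k) = Phi v u"
proof -
  obtain C \<eta> where C: "C \<noteq> 0" and rel: "\<And>z. sig (z + om k) = C * exp (\<eta> * z) * sig z"
    using sig_quasi[of k] by blast
  have a: "sig (u + om k + v) = C * exp (\<eta> * (u + v)) * sig (u + v)"
    using rel[of "u + v"] by (simp add: algebra_simps)
  have b: "sig (u + om k - v) = C * exp (\<eta> * (u - v)) * sig (u - v)"
    using rel[of "u - v"] by (simp add: algebra_simps)
  have c: "sig (u + om k) = C * exp (\<eta> * u) * sig u" by (rule rel)
  have e: "exp (\<eta> * (u + v)) * exp (\<eta> * (u - v)) = (exp (\<eta> * u))\<^sup>2"
    by (simp add: exp_add[symmetric] power2_eq_square algebra_simps)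
  have su: "sig u \<noteq> 0" using sig_nz[OF u] .
  have "sig (u + om k + v) * sig (u + om k - v) / ((sig (u + om k))\<^sup>2 * (sig v)\<^sup>2) =
        (C * C * (exp (\<eta> * (u + v)) * exp (\<eta> * (u - v)))) * (sig (u + v) * sig (u - v)) /
        ((C * C * (exp (\<eta> * u))\<^sup>2) * ((sig u)\<^sup>2 * (sig v)\<^sup>2))"
    unfolding a b c by (simp add: power2_eq_square mult_ac)
  also have "\<dots> = sig (u + v) * sig (u - v) / ((sig u)\<^sup>2 * (sig v)\<^sup>2)"
    unfolding e using C by simp
  finally show ?thesis by (simp add: Phi_def pe_periodic[OF u])
qed

lemma ev_notin_Lam: "\<forall>\<^sub>F u in at a. u \<notin> Lam"
proof (cases "a \<in> Lam")
  case True
  have "\<forall>x. x \<noteq> a \<and> dist x a < dl \<longrightarrow> x \<notin> Lam"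
    using Lam_dist[OF _ True] by (auto simp: dist_commute) (meson not_le)
  thus ?thesis unfolding eventually_at using dl_pos by blast
next
  case False
  hence "\<forall>\<^sub>F u in at a. u \<in> UNIV - Lam" using open_S by (intro eventually_at_in_open') auto
  thus ?thesis by simp
qed

lemma Phi_tendsto_lat:
  assumes v: "v \<notin> Lam"
  shows "(Phi v \<longlongrightarrow> GG v 0) (at (om k))"
proof -
  have "((\<lambda>x. Phi v (x + - om k)) \<longlongrightarrow> GG v 0) (at (0 - - om k))"
    by (rule LIM_offset[OF Phi_tendsto0[OF v]])
  hence t: "((\<lambda>x. Phi v (x + - om k)) \<longlongrightarrow> GG v 0) (at (om k))" by simp
  have "\<forall>\<^sub>F x in at (om k). Phi v (x + - om k) = Phi v x"
    using ev_notin_Lam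
  proof eventually_elim
    case (elim x)
    have x': "x + - om k \<notin> Lam"
    proof
      assume "x + - om k \<in> Lam"
      hence "(x + - om k) + om k \<in> Lam" using Lam_shift by blast
      thus False using elim by simp
    qed
    show ?case using Phi_periodic[OF x' v, of k] by simp
  qed
  thus ?thesis using Lim_transform_eventually[OF t] by blast
qed

definition Psi :: "complex \<Rightarrow> complex \<Rightarrow> complex" where
  "Psi v u = (if u \<in> Lam then GG v 0 else Phi v u)"

lemma Phi_holo:
  assumes v: "v \<notin> Lam"
  shows "Phi v holomorphic_on (UNIV - Lam)"
proof -
  have "pe holomorphic_on (UNIV - Lam)"
    using pe_deriv open_S by (auto simp: holomorphic_on_open)
  moreover have "\<And>u. u \<in> UNIV - Lam \<Longrightarrow> (sig u)\<^sup>2 * (sig v)\<^sup>2 \<noteq> 0" using sig_nz v by auto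
  ultimately show ?thesis unfolding Phi_def[abs_def]
    by (intro holomorphic_intros sig_holo_comp holomorphic_on_subset[OF sig_holo]) auto
qed

lemma Psi_tendsto:
  assumes v: "v \<notin> Lam"
  shows "(Psi v \<longlongrightarrow> Psi v a) (at a)"
proof (cases "a \<in> Lam")
  case True
  then obtain k where k: "a = om k" by (auto simp: Lam_def)
  have "\<forall>\<^sub>F u in at a. Phi v u = Psi v u" using ev_notin_Lam by eventually_elim (simp add: Psi_def)
  moreover have "(Phi v \<longlongrightarrow> Psi v a) (at a)" using Phi_tendsto_lat[OF v, of k] True k by (simp add: Psi_def)
  ultimately show ?thesis using Lim_transform_eventually by blast
next
  case False
  have "isCont (Phi v) a"
    using Phi_holo[OF v] open_S False
    by (meson DiffI UNIV_I continuous_on_eq_continuous_at holomorphic_on_imp_continuous_on)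
  hence t: "(Phi v \<longlongrightarrow> Psi v a) (at a)" using False by (simp add: Psi_def isCont_def)
  have "\<forall>\<^sub>F u in at a. Phi v u = Psi v u" using ev_notin_Lam by eventually_elim (simp add: Psi_def)
  thus ?thesis using Lim_transform_eventually[OF t] by blast
qed

lemma finite_Lam_ball: "finite (Lam \<inter> ball a (dl / 2))"
proof (cases "Lam \<inter> ball a (dl / 2) = {}")
  case False
  then obtain x where x: "x \<in> Lam \<inter> ball a (dl / 2)" by blast
  have "Lam \<inter> ball a (dl / 2) \<subseteq> {x}"
  proof
    fix y assume y: "y \<in> Lam \<inter> ball a (dl / 2)"
    have "dist y x \<le> dist y a + dist a x" by (rule dist_triangle)
    moreover have "dist y a < dl / 2" "dist a x < dl / 2" using x y by (auto simp: dist_commute)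
    ultimately have "dist y x < dl" by linarith
    thus "y \<in> {x}" using Lam_dist[of y x] x y by (auto simp: not_le[symmetric])
  qed
  thus ?thesis using finite_subset by blast
qed simp

lemma Psi_holo:
  assumes v: "v \<notin> Lam"
  shows "Psi v holomorphic_on UNIV"
proof -
  have "Psi v field_differentiable (at a)" for a
  proof -
    have "Psi v holomorphic_on ball a (dl / 2)"
    proof (rule no_isolated_singularity'[where K = "Lam \<inter> ball a (dl / 2)"])
      fix z assume "z \<in> Lam \<inter> ball a (dl / 2)"
      show "(Psi v \<longlongrightarrow> Psi v z) (at z within ball a (dl / 2))"
        using Psi_tendsto[OF v, of z] by (rule tendsto_within_subset) simp
    next
      have "Phi v holomorphic_on (ball a (dl / 2) - Lam \<inter> ball a (dl / 2))"
        by (rule holomorphic_on_subset[OF Phi_holo[OF v]]) auto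
      thus "Psi v holomorphic_on (ball a (dl / 2) - Lam \<inter> ball a (dl / 2))"
        by (rule holomorphic_transform) (auto simp: Psi_def)
    qed (auto simp: finite_Lam_ball)
    thus ?thesis using dl_pos by (intro holomorphic_on_imp_differentiable_at[of _ "ball a (dl/2)"]) auto
  qed
  thus ?thesis by (simp add: holomorphic_on_def field_differentiable_at_within)
qed

lemma lat_reduce: "\<exists>k s t. s \<in> {0..1} \<and> t \<in> {0..1} \<and> z = om k + (of_real s * w1 + of_real t * w2)"
proof -
  define \<tau> where "\<tau> = w2 / w1"
  have it: "Im \<tau> \<noteq> 0" using periods by (simp add: \<tau>_def)
  define t0 where "t0 = Im (z / w1) / Im \<tau>"
  define s0 where "s0 = Re (z / w1) - t0 * Re \<tau>"
  have "of_real s0 + of_real t0 * \<tau> = z / w1"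
    by (rule complex_eqI) (use it in \<open>simp_all add: s0_def t0_def\<close>)
  hence zz: "z = of_real s0 * w1 + of_real t0 * w2"
    using w1_nz by (simp add: \<tau>_def field_simps)
  define k where "k = (\<lfloor>s0\<rfloor>, \<lfloor>t0\<rfloor>)"
  have "z = om k + (of_real (s0 - of_int \<lfloor>s0\<rfloor>) * w1 + of_real (t0 - of_int \<lfloor>t0\<rfloor>) * w2)"
    unfolding zz k_def by (simp add: lat_pt_def algebra_simps)
  moreover have "s0 - of_int \<lfloor>s0\<rfloor> \<in> {0..1}" "t0 - of_int \<lfloor>t0\<rfloor> \<in> {0..1}"
    by (auto simp: floor_le_iff) linarith+
  ultimately show ?thesis by blast
qed

lemma Psi_periodic:
  assumes v: "v \<notin> Lam"
  shows "Psi v (z + om k) = Psi v z"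
proof (cases "z \<in> Lam")
  case True thus ?thesis using Lam_shift by (simp add: Psi_def)
next
  case False thus ?thesis using Lam_shift Phi_periodic[OF False v] by (simp add: Psi_def)
qed

lemma Psi_bounded:
  assumes v: "v \<notin> Lam"
  shows "bounded (range (Psi v))"
proof -
  define K where "K = (\<lambda>p. of_real (fst p) * w1 + of_real (snd p) * w2) ` ({0..1::real} \<times> {0..1::real})"
  have cK: "compact K" unfolding K_def
    by (intro compact_continuous_image compact_Times compact_Icc continuous_intros)
  have cP: "continuous_on K (Psi v)"
    using Psi_tendsto[OF v] by (intro continuous_at_imp_continuous_on) (auto simp: isCont_def)
  have "range (Psi v) \<subseteq> Psi v ` K"
  proof
    fix y assume "y \<in> range (Psi v)"
    then obtain z where y: "y = Psi v z" by blast
    obtain k s t where st: "s \<in> {0..1}" "t \<in> {0..1}" and z: "z = om k + (of_real s * w1 + of_real t * w2)"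
      using lat_reduce by blast
    have "of_real s * w1 + of_real t * w2 \<in> K" using st unfolding K_def by force
    moreover have "y = Psi v (of_real s * w1 + of_real t * w2)"
      using Psi_periodic[OF v, of "of_real s * w1 + of_real t * w2" k] y z by (simp add: add.commute)
    ultimately show "y \<in> Psi v ` K" by blast
  qed
  moreover have "bounded (Psi v ` K)"
    by (intro compact_imp_bounded compact_continuous_image cP cK)
  ultimately show ?thesis using bounded_subset by blast
qed

theorem pe_sigma:
  assumes u: "u \<notin> Lam" and v: "v \<notin> Lam"
  shows "pe u - pe v = - (sig (u + v) * sig (u - v) / ((sig u)\<^sup>2 * (sig v)\<^sup>2))"
proof -
  have "Psi v constant_on UNIV" by (rule Liouville_theorem[OF Psi_holo[OF v] Psi_bounded[OF v]])
  hence "Psi v u = Psi v v" unfolding constant_on_def by auto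
  hence "Phi v u = Phi v v" using u v by (simp add: Psi_def)
  also have "Phi v v = 0" by (simp add: Phi_def sig_0)
  finally show ?thesis by (simp add: Phi_def eq_neg_iff_add_eq_0)
qed

end


lemma mat2_eq_iff: "mat2 a b c d = mat2 a' b' c' d' \<longleftrightarrow> a = a' \<and> b = b' \<and> c = c' \<and> d = d'"
proof
  assume h: "mat2 a b c d = mat2 a' b' c' d'"
  have "mat2 a b c d $ 1 $ 1 = mat2 a' b' c' d' $ 1 $ 1" "mat2 a b c d $ 1 $ 2 = mat2 a' b' c' d' $ 1 $ 2"
       "mat2 a b c d $ 2 $ 1 = mat2 a' b' c' d' $ 2 $ 1" "mat2 a b c d $ 2 $ 2 = mat2 a' b' c' d' $ 2 $ 2"
    using h by simp_all
  thus "a = a' \<and> b = b' \<and> c = c' \<and> d = d'" by (simp add: mat2_def)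
qed simp

lemma mat2_nth: "mat2 a b c d $ 1 $ 1 = a" "mat2 a b c d $ 1 $ 2 = b" "mat2 a b c d $ 2 $ 1 = c" "mat2 a b c d $ 2 $ 2 = d"
  by (simp_all add: mat2_def)

lemma mat2_ext: "(M :: complex^2^2) = mat2 (M $ 1 $ 1) (M $ 1 $ 2) (M $ 2 $ 1) (M $ 2 $ 2)"
  unfolding vec_eq_iff forall_2 by (simp add: mat2_nth)

lemma mat2_mult: "mat2 a b c d ** mat2 e f g h = mat2 (a*e + b*g) (a*f + b*h) (c*e + d*g) (c*f + d*h)"
  by (subst mat2_ext) (simp add: matrix_matrix_mult_def sum_2 mat2_nth)

lemma mat2_scale: "t *\<^sub>m mat2 a b c d = mat2 (t*a) (t*b) (t*c) (t*d)"
  by (subst mat2_ext) (simp add: msc_def mat2_nth)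

lemma mat2_add: "mat2 a b c d + mat2 e f g h = mat2 (a+e) (b+f) (c+g) (d+h)"
  by (subst mat2_ext) (simp add: mat2_nth)

definition OM :: "complex \<Rightarrow> complex \<Rightarrow> complex \<Rightarrow> complex \<Rightarrow> complex \<Rightarrow> complex^2^2" where
  "OM K c1 c2 r1 r2 = mat2 (K*c1*r1) (K*c1*r2) (K*c2*r1) (K*c2*r2)"

lemma OM_mult: "OM K c1 c2 r1 r2 ** OM K' c1' c2' r1' r2' = OM (K*K'*(r1*c1' + r2*c2')) c1 c2 r1' r2'"
  unfolding OM_def mat2_mult mat2_eq_iff by (simp add: algebra_simps)

lemma OM_scale: "t *\<^sub>m OM K c1 c2 r1 r2 = OM (t*K) c1 c2 r1 r2"
  unfolding OM_def mat2_scale mat2_eq_iff by (simp add: algebra_simps)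

lemma OM_add_row: "OM K c1 c2 r1 r2 + OM K' c1' c2' r1 r2 = OM 1 (K*c1 + K'*c1') (K*c2 + K'*c2') r1 r2"
  unfolding OM_def mat2_add mat2_eq_iff by (simp add: algebra_simps)

lemma mat_rdistrib: "((A::complex^2^2) + B) ** C = A ** C + B ** C"
  by (simp add: matrix_matrix_mult_def vec_eq_iff sum.distrib distrib_right)

lemma mat_distrib: "((A::complex^2^2) + B) ** (C + D) = A ** C + A ** D + (B ** C + B ** D)"
  by (simp add: matrix_add_ldistrib mat_rdistrib)

context wlat
begin

lemma wM_OM: "wM w1 w2 x b l = OM (1 / (sig (2*x) * sig (2*l)))
   ((sig (x + l - b))\<^sup>2 * pe (x + l - b)) ((sig (x + l - b))\<^sup>2) (- (sig (x - l))\<^sup>2) ((sig (x - l))\<^sup>2 * pe (x - l))"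
  unfolding wM_def OM_def mat2_scale mat2_eq_iff by (simp add: field_simps)

definition br :: "complex \<Rightarrow> complex \<Rightarrow> complex" where "br u v = sig (u + v) * sig (u - v)"

lemma br_pe: "u \<notin> Lam \<Longrightarrow> v \<notin> Lam \<Longrightarrow> br u v = - ((pe u - pe v) * (sig u)\<^sup>2 * (sig v)\<^sup>2)"
proof -
  assume u: "u \<notin> Lam" and v: "v \<notin> Lam"
  have "pe u - pe v = - (sig (u + v) * sig (u - v) / ((sig u)\<^sup>2 * (sig v)\<^sup>2))" by (rule pe_sigma[OF u v])
  thus ?thesis using sig_nz[OF u] sig_nz[OF v] by (simp add: br_def field_simps)
qed

lemma dot_br:
  assumes p: "p \<notin> Lam" and q: "q \<notin> Lam"
  shows "(- (sig q)\<^sup>2) * ((sig p)\<^sup>2 * pe p) + ((sig q)\<^sup>2 * pe q) * (sig p)\<^sup>2 = br p q"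
  unfolding br_pe[OF p q] by (simp add: algebra_simps)

lemma three_term:
  assumes "a \<notin> Lam" "b \<notin> Lam" "c \<notin> Lam" "d \<notin> Lam"
  shows "br a b * br c d + br a c * br d b + br a d * br b c = 0"
  unfolding br_pe[OF assms(1,2)] br_pe[OF assms(3,4)] br_pe[OF assms(1,3)] br_pe[OF assms(4,2)]
    br_pe[OF assms(1,4)] br_pe[OF assms(2,3)]
  by (simp add: algebra_simps power2_eq_square)

lemma br_swap: "br v u = - br u v"
  unfolding br_def using sig_odd[of "u - v"] by (simp add: add.commute)

end


lemma I1_abs:
  fixes A1 A2 A3 A4 B1 B2 B3 B4 D1 D2 D3 D4 U1 U2 V1 V2 W1 Y LE :: complex
  assumes TT: "A1*U1*V1*B2 - U2*A2*B3*V2 - W1*D2*Y*LE = 0"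
    and nz: "A2 \<noteq> 0" "A3 \<noteq> 0" "B3 \<noteq> 0" "B4 \<noteq> 0" "D4 \<noteq> 0"
  shows "(A1*A4*B1*B2/(A3*A2*B3*B4)) * (A3*U1*V1*B4) - U2*A4*B1*V2 = Y * (A4*B1*D2/(A2*B3*D4)) * (W1*D4) * LE"
proof -
  have "(A1*A4*B1*B2/(A3*A2*B3*B4)) * (A3*U1*V1*B4) - U2*A4*B1*V2 = A4*B1/(A2*B3) * (A1*U1*V1*B2 - U2*A2*B3*V2)"
    using nz by (simp add: field_simps)
  also have "A1*U1*V1*B2 - U2*A2*B3*V2 = W1*D2*Y*LE" using TT by simp
  also have "A4*B1/(A2*B3) * (W1*D2*Y*LE) = Y * (A4*B1*D2/(A2*B3*D4)) * (W1*D4) * LE"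
    using nz by (simp add: field_simps)
  finally show ?thesis .
qed

lemma I2_abs:
  fixes A1 A2 A3 A4 B1 B2 B3 B4 D1 D2 D3 D4 U1 U2 V3 V4 W2 Y LE :: complex
  assumes TT: "A1*U1*B1*V3 - U2*A2*V4*B4 - D1*W2*Y*LE = 0"
    and nz: "A2 \<noteq> 0" "A3 \<noteq> 0" "B1 \<noteq> 0" "B2 \<noteq> 0" "B3 \<noteq> 0" "B4 \<noteq> 0" "D2 \<noteq> 0" "D3 \<noteq> 0" "D4 \<noteq> 0"
  shows "(A1*A4*B1*B2/(A3*A2*B3*B4)) * (A3*U1*B3*V3) - U2*A4*V4*B2 =
     Y * (A4*B1*D2/(A2*B3*D4)) * (D1*D4*B3*B2/(D3*D2*B1*B4)) * (D3*W2) * LE"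
proof -
  have "(A1*A4*B1*B2/(A3*A2*B3*B4)) * (A3*U1*B3*V3) - U2*A4*V4*B2 = A4*B2/(A2*B4) * (A1*U1*B1*V3 - U2*A2*V4*B4)"
    using nz by (simp add: field_simps)
  also have "A1*U1*B1*V3 - U2*A2*V4*B4 = D1*W2*Y*LE" using TT by simp
  also have "A4*B2/(A2*B4) * (D1*W2*Y*LE) = Y * (A4*B1*D2/(A2*B3*D4)) * (D1*D4*B3*B2/(D3*D2*B1*B4)) * (D3*W2) * LE"
    using nz by (simp add: field_simps)
  finally show ?thesis .
qed

lemma I3_abs:
  fixes A1 A2 A3 A4 B1 B2 B3 B4 D1 D2 D3 D4 U3 U4 V1 V2 W4 Y LE :: complex
  assumes TT: "U3*A4*V1*B2 - A3*U4*B3*V2 - D3*W4*Y*LE = 0"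
    and nz: "A1 \<noteq> 0" "A2 \<noteq> 0" "A3 \<noteq> 0" "A4 \<noteq> 0" "B3 \<noteq> 0" "B4 \<noteq> 0" "D1 \<noteq> 0" "D2 \<noteq> 0" "D4 \<noteq> 0"
  shows "- (A1*A4*B1*B2/(A3*A2*B3*B4)) * (U3*A2*V1*B4) + A1*U4*B1*V2 =
     - Y * (A4*B1*D2/(A2*B3*D4)) * ((A1*A2/(A3*A4)) * (D3*D4/(D1*D2))) * (D1*W4) * LE"
proof -
  have "- (A1*A4*B1*B2/(A3*A2*B3*B4)) * (U3*A2*V1*B4) + A1*U4*B1*V2 = - A1*B1/(A3*B3) * (U3*A4*V1*B2 - A3*U4*B3*V2)"
    using nz by (simp add: field_simps)
  also have "U3*A4*V1*B2 - A3*U4*B3*V2 = D3*W4*Y*LE" using TT by simp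
  also have "- A1*B1/(A3*B3) * (D3*W4*Y*LE) = - Y * (A4*B1*D2/(A2*B3*D4)) * ((A1*A2/(A3*A4)) * (D3*D4/(D1*D2))) * (D1*W4) * LE"
    using nz by (simp add: field_simps)
  finally show ?thesis .
qed

lemma I4_abs:
  fixes A1 A2 A3 A4 B1 B2 B3 B4 D1 D2 D3 D4 U3 U4 V3 V4 W3 Y LE :: complex
  assumes TT: "U3*A4*B1*V3 - A3*U4*V4*B4 - W3*D4*Y*LE = 0"
    and nz: "A1 \<noteq> 0" "A2 \<noteq> 0" "A3 \<noteq> 0" "A4 \<noteq> 0" "B1 \<noteq> 0" "B2 \<noteq> 0" "B3 \<noteq> 0" "B4 \<noteq> 0" "D1 \<noteq> 0" "D2 \<noteq> 0" "D3 \<noteq> 0" "D4 \<noteq> 0"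
  shows "- (A1*A4*B1*B2/(A3*A2*B3*B4)) * (U3*A2*B3*V3) + A1*U4*V4*B2 =
     - Y * (A4*B1*D2/(A2*B3*D4)) * ((A1*A2/(A3*A4)) * (D3*D4/(D1*D2))) * (D1*D4*B3*B2/(D3*D2*B1*B4)) * (W3*D2) * LE"
proof -
  have "- (A1*A4*B1*B2/(A3*A2*B3*B4)) * (U3*A2*B3*V3) + A1*U4*V4*B2 = - A1*B2/(A3*B4) * (U3*A4*B1*V3 - A3*U4*V4*B4)"
    using nz by (simp add: field_simps)
  also have "U3*A4*B1*V3 - A3*U4*V4*B4 = W3*D4*Y*LE" using TT by simp
  also have "- A1*B2/(A3*B4) * (W3*D4*Y*LE) = - Y * (A4*B1*D2/(A2*B3*D4)) * ((A1*A2/(A3*A4)) * (D3*D4/(D1*D2))) * (D1*D4*B3*B2/(D3*D2*B1*B4)) * (W3*D2) * LE"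
    using nz by (simp add: field_simps)
  finally show ?thesis .
qed

lemma R0_eq:
  fixes C a b d s R0 :: complex
  assumes sg: "C * a = s * R0 * b * d" "s * s = 1" and nz: "b \<noteq> 0" "d \<noteq> 0"
  shows "R0 = s * a * C / (b * d)"
proof -
  have "s * (C * a) = (s * s) * (R0 * b * d)" using sg(1) by (simp add: mult_ac)
  hence "R0 * b * d = s * a * C" using sg(2) by (simp add: mult_ac)
  thus ?thesis using nz by (simp add: field_simps)
qed

lemma E1_abs:
  fixes C a b d s R0 X Y Z Lm LE e1 e2 g11 g21 F :: complex
  assumes I: "C\<^sup>2 * (e1 * g11) - e2 * g21 = Y * R0 * F * LE"
    and sg: "C * a = s * R0 * b * d" "s * s = 1"
    and nz: "C \<noteq> 0" "a \<noteq> 0" "b \<noteq> 0" "d \<noteq> 0" "X \<noteq> 0" "Y \<noteq> 0" "Z \<noteq> 0" "Lm \<noteq> 0"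
  shows "(C/(Y*Lm)) * (b/(X*Lm)) * e1 * g11 + (-1/(C*Y*Lm)) * (b/(X*Lm)) * e2 * g21 =
    s * ((d/(Z*Lm)) * (a/(X*Lm)) * f1 * 0 + (-1/(d*Z*Lm)) * (a/(X*Lm)) * F * (-(Z*LE)))"
proof -
  have "(C/(Y*Lm)) * (b/(X*Lm)) * e1 * g11 + (-1/(C*Y*Lm)) * (b/(X*Lm)) * e2 * g21
      = b/(X*Y*Lm^2*C) * (C\<^sup>2 * (e1 * g11) - e2 * g21)"
    using nz by (simp add: field_simps power2_eq_square)
  also have "\<dots> = b/(X*Y*Lm^2*C) * (Y * R0 * F * LE)" by (simp only: I)
  also have "\<dots> = s * ((d/(Z*Lm)) * (a/(X*Lm)) * f1 * 0 + (-1/(d*Z*Lm)) * (a/(X*Lm)) * F * (-(Z*LE)))"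
    unfolding R0_eq[OF sg nz(3,4)] using nz sg(2) by (simp add: field_simps power2_eq_square)
  finally show ?thesis .
qed

lemma E2_abs:
  fixes C a b d s R0 X Y Z Lm LE e1 e2 g12 g22 F dd :: complex
  assumes I: "C\<^sup>2 * (e1 * g12) - e2 * g22 = Y * R0 * d\<^sup>2 * F * LE"
    and sg: "C * a = s * R0 * b * d" "s * s = 1"
    and nz: "C \<noteq> 0" "a \<noteq> 0" "b \<noteq> 0" "d \<noteq> 0" "X \<noteq> 0" "Y \<noteq> 0" "Z \<noteq> 0" "Lm \<noteq> 0"
  shows "(C/(Y*Lm)) * (b/(X*Lm)) * e1 * g12 + (-1/(C*Y*Lm)) * (b/(X*Lm)) * e2 * g22 =
    s * ((d/(Z*Lm)) * (a/(X*Lm)) * F * (Z*LE) + (-1/(d*Z*Lm)) * (a/(X*Lm)) * f2 * 0)"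
proof -
  have "(C/(Y*Lm)) * (b/(X*Lm)) * e1 * g12 + (-1/(C*Y*Lm)) * (b/(X*Lm)) * e2 * g22
      = b/(X*Y*Lm^2*C) * (C\<^sup>2 * (e1 * g12) - e2 * g22)"
    using nz by (simp add: field_simps power2_eq_square)
  also have "\<dots> = b/(X*Y*Lm^2*C) * (Y * R0 * d\<^sup>2 * F * LE)" by (simp only: I)
  also have "\<dots> = s * ((d/(Z*Lm)) * (a/(X*Lm)) * F * (Z*LE) + (-1/(d*Z*Lm)) * (a/(X*Lm)) * f2 * 0)"
    unfolding R0_eq[OF sg nz(3,4)] using nz sg(2) by (simp add: field_simps power2_eq_square)
  finally show ?thesis .
qed

lemma E3_abs:
  fixes C a b d s R0 X Y Z Lm LE e3 e4 g11 g21 F :: complex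
  assumes I: "- C\<^sup>2 * (e3 * g11) + e4 * g21 = - Y * R0 * (b\<^sup>2 / a\<^sup>2) * F * LE"
    and sg: "C * a = s * R0 * b * d" "s * s = 1"
    and nz: "C \<noteq> 0" "a \<noteq> 0" "b \<noteq> 0" "d \<noteq> 0" "X \<noteq> 0" "Y \<noteq> 0" "Z \<noteq> 0" "Lm \<noteq> 0"
  shows "(C/(Y*Lm)) * (-1/(b*X*Lm)) * e3 * g11 + (-1/(C*Y*Lm)) * (-1/(b*X*Lm)) * e4 * g21 =
    s * ((d/(Z*Lm)) * (-1/(a*X*Lm)) * f3 * 0 + (-1/(d*Z*Lm)) * (-1/(a*X*Lm)) * F * (-(Z*LE)))"
proof -
  have "(C/(Y*Lm)) * (-1/(b*X*Lm)) * e3 * g11 + (-1/(C*Y*Lm)) * (-1/(b*X*Lm)) * e4 * g21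
      = 1/(b*X*Y*Lm^2*C) * (- C\<^sup>2 * (e3 * g11) + e4 * g21)"
    using nz by (simp add: field_simps power2_eq_square)
  also have "\<dots> = 1/(b*X*Y*Lm^2*C) * (- Y * R0 * (b\<^sup>2 / a\<^sup>2) * F * LE)" by (simp only: I)
  also have "\<dots> = s * ((d/(Z*Lm)) * (-1/(a*X*Lm)) * f3 * 0 + (-1/(d*Z*Lm)) * (-1/(a*X*Lm)) * F * (-(Z*LE)))"
    unfolding R0_eq[OF sg nz(3,4)] using nz sg(2) by (simp add: field_simps power2_eq_square)
  finally show ?thesis .
qed

lemma E4_abs:
  fixes C a b d s R0 X Y Z Lm LE e3 e4 g12 g22 F :: complex
  assumes I: "- C\<^sup>2 * (e3 * g12) + e4 * g22 = - Y * R0 * (b\<^sup>2 / a\<^sup>2) * d\<^sup>2 * F * LE"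
    and sg: "C * a = s * R0 * b * d" "s * s = 1"
    and nz: "C \<noteq> 0" "a \<noteq> 0" "b \<noteq> 0" "d \<noteq> 0" "X \<noteq> 0" "Y \<noteq> 0" "Z \<noteq> 0" "Lm \<noteq> 0"
  shows "(C/(Y*Lm)) * (-1/(b*X*Lm)) * e3 * g12 + (-1/(C*Y*Lm)) * (-1/(b*X*Lm)) * e4 * g22 =
    s * ((d/(Z*Lm)) * (-1/(a*X*Lm)) * F * (Z*LE) + (-1/(d*Z*Lm)) * (-1/(a*X*Lm)) * f4 * 0)"
proof -
  have "(C/(Y*Lm)) * (-1/(b*X*Lm)) * e3 * g12 + (-1/(C*Y*Lm)) * (-1/(b*X*Lm)) * e4 * g22
      = 1/(b*X*Y*Lm^2*C) * (- C\<^sup>2 * (e3 * g12) + e4 * g22)"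
    using nz by (simp add: field_simps power2_eq_square)
  also have "\<dots> = 1/(b*X*Y*Lm^2*C) * (- Y * R0 * (b\<^sup>2 / a\<^sup>2) * d\<^sup>2 * F * LE)" by (simp only: I)
  also have "\<dots> = s * ((d/(Z*Lm)) * (-1/(a*X*Lm)) * F * (Z*LE) + (-1/(d*Z*Lm)) * (-1/(a*X*Lm)) * f4 * 0)"
    unfolding R0_eq[OF sg nz(3,4)] using nz sg(2) by (simp add: field_simps power2_eq_square)
  finally show ?thesis .
qed

lemma pair_eq:
  fixes q11 q12 q21 q22 u1 u2 t1 t2 :: complex
  assumes "q11*u1 + q12*u2 = q11*t1 + q12*t2" "q21*u1 + q22*u2 = q21*t1 + q22*t2" "q11*q22 - q12*q21 \<noteq> 0"
  shows "u1 = t1 \<and> u2 = t2"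
proof -
  have a: "q11*(u1 - t1) + q12*(u2 - t2) = 0" "q21*(u1 - t1) + q22*(u2 - t2) = 0"
    using assms(1,2) by (simp_all add: algebra_simps)
  have "(q11*q22 - q12*q21) * (u1 - t1) = q22 * (q11*(u1 - t1) + q12*(u2 - t2)) - q12 * (q21*(u1 - t1) + q22*(u2 - t2))"
    by (simp add: algebra_simps)
  hence "(q11*q22 - q12*q21) * (u1 - t1) = 0" using a by simp
  hence 1: "u1 = t1" using assms(3) by simp
  have "(q11*q22 - q12*q21) * (u2 - t2) = q11 * (q21*(u1 - t1) + q22*(u2 - t2)) - q21 * (q11*(u1 - t1) + q12*(u2 - t2))"
    by (simp add: algebra_simps)
  hence "(q11*q22 - q12*q21) * (u2 - t2) = 0" using a by simp
  hence "u2 = t2" using assms(3) by simp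
  with 1 show ?thesis by simp
qed

lemma OM_final:
  assumes "u11 = s * v11" "u12 = s * v12" "u21 = s * v21" "u22 = s * v22"
  shows "OM 1 u11 u12 r1 r2 + OM 1 u21 u22 r1' r2' = s *\<^sub>m (OM 1 v11 v12 r1 r2 + OM 1 v21 v22 r1' r2')"
  unfolding OM_def mat2_add mat2_scale mat2_eq_iff assms by (simp add: algebra_simps)


lemma prod_form:
  "(OM K1 a1 a2 r1 r2 + OM K2 b1 b2 s1 s2) ** (OM K3 c1 c2 t1 t2 + OM K4 d1 d2 u1 u2) =
   OM 1 (K1*K3*(r1*c1 + r2*c2)*a1 + K2*K3*(s1*c1 + s2*c2)*b1) (K1*K3*(r1*c1 + r2*c2)*a2 + K2*K3*(s1*c1 + s2*c2)*b2) t1 t2 +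
   OM 1 (K1*K4*(r1*d1 + r2*d2)*a1 + K2*K4*(s1*d1 + s2*d2)*b1) (K1*K4*(r1*d1 + r2*d2)*a2 + K2*K4*(s1*d1 + s2*d2)*b2) u1 u2"
  unfolding OM_def mat2_add mat2_mult mat2_eq_iff by (simp add: algebra_simps)

context wlat
begin

definition c1 :: "complex \<Rightarrow> complex" where "c1 p = (sig p)\<^sup>2 * pe p"
definition c2 :: "complex \<Rightarrow> complex" where "c2 p = (sig p)\<^sup>2"
definition r1 :: "complex \<Rightarrow> complex" where "r1 q = - (sig q)\<^sup>2"
definition r2 :: "complex \<Rightarrow> complex" where "r2 q = (sig q)\<^sup>2 * pe q"

lemma wM_OM': "wM w1 w2 x b l = OM (1 / (sig (2*x) * sig (2*l))) (c1 (x + l - b)) (c2 (x + l - b)) (r1 (x - l)) (r2 (x - l))"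
  unfolding wM_OM c1_def c2_def r1_def r2_def ..

lemma wM_neg: "wM w1 w2 x (- b) (- l) = OM (- 1 / (sig (2*x) * sig (2*l))) (c1 (x - l + b)) (c2 (x - l + b)) (r1 (x + l)) (r2 (x + l))"
proof -
  have e1: "x + - l - - b = x - l + b" "x - - l = x + l" by simp_all
  have e2: "sig (2 * - l) = - sig (2 * l)" using sig_odd[of "2 * l"] by simp
  show ?thesis unfolding wM_OM' e1 e2 by (simp add: divide_simps)
qed

lemma dot_br': "p \<notin> Lam \<Longrightarrow> q \<notin> Lam \<Longrightarrow> r1 q * c1 p + r2 q * c2 p = br p q"
  unfolding c1_def c2_def r1_def r2_def by (rule dot_br)

lemma sigeq: "a = b \<Longrightarrow> sig a = sig b" by simp
lemma signeg: "a = - b \<Longrightarrow> sig a = - sig b" by (simp add: sig_odd)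
lemma br_eq: "sig (p + q) = u \<Longrightarrow> sig (p - q) = v \<Longrightarrow> br p q = u * v" by (simp add: br_def)

lemma wL_OM: "wL w1 w2 p x b l = OM (exp p * (1 / (sig (2*x) * sig (2*l)))) (c1 (x + l - b)) (c2 (x + l - b)) (r1 (x - l)) (r2 (x - l))
   + OM (exp (- p) * (- 1 / (sig (2*x) * sig (2*l)))) (c1 (x - l + b)) (c2 (x - l + b)) (r1 (x + l)) (r2 (x + l))"
  unfolding wL_def by (simp only: wM_neg) (simp only: wM_OM' OM_scale)

lemma wV_OM: "wV w1 w2 e G x l = OM (exp (e * G) * (1 / (sig (2*x) * sig (2*l)))) (c1 (x + l - e)) (c2 (x + l - e)) (r1 (x - l)) (r2 (x - l))
   + OM (exp (- (e * G)) * (- 1 / (sig (2*x) * sig (2*l)))) (c1 (x - l + e)) (c2 (x - l + e)) (r1 (x + l)) (r2 (x + l))"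
  unfolding wV_def by (simp only: wM_neg) (simp only: wM_OM' OM_scale)

end


lemma pex: "q1*(P1*a1 + P2*b1) + q2*(P1*a2 + P2*b2) = P1*(q1*a1 + q2*a2) + P2*(q1*b1 + q2*b2)"
  for q1 q2 P1 P2 a1 a2 b1 b2 :: complex
  by (simp add: algebra_simps)

lemma pex_s: "q1*(s*(P1*a1 + P2*b1)) + q2*(s*(P1*a2 + P2*b2)) = s*(P1*(q1*a1 + q2*a2) + P2*(q1*b1 + q2*b2))"
  for q1 q2 s P1 P2 a1 a2 b1 b2 :: complex
  by (simp add: algebra_simps)

context wlat
begin

lemma main_local:
  fixes x y z be ep l pa pc ga gd :: complex
  assumes okA: "wF_ok w1 w2 x y ep" and okB: "wF_ok w1 w2 y z (be - ep)" and okD: "wF_ok w1 w2 x z be"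
    and X0: "sig (2*x) \<noteq> 0" and Y0: "sig (2*y) \<noteq> 0" and Z0: "sig (2*z) \<noteq> 0"
    and C2: "(exp pc)\<^sup>2 = wF w1 w2 y x ep * wF w1 w2 y z (be - ep)"
    and d2: "(exp (ep*gd))\<^sup>2 = wF w1 w2 z x be / wF w1 w2 z y (be - ep)"
    and ab: "(exp pa)\<^sup>2 * wF w1 w2 x y ep = (exp (ep*ga))\<^sup>2 * wF w1 w2 x z be"
    and gl: "x + l \<notin> Lam" "x - l \<notin> Lam" "y - l + ep \<notin> Lam" "y + l - ep \<notin> Lam"
            "z + l - be \<notin> Lam" "z - l + be \<notin> Lam"
            "x + l - ep \<notin> Lam" "x - l + ep \<notin> Lam" "x + l - be \<notin> Lam" "x - l + be \<notin> Lam"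
            "y - l \<notin> Lam" "y + l \<notin> Lam" "z - l \<notin> Lam" "z + l \<notin> Lam"
            "y + l - be \<notin> Lam" "y - l + be \<notin> Lam" "z + l - ep \<notin> Lam" "z - l + ep \<notin> Lam"
            "2*l \<notin> Lam" "2*l - 2*ep \<notin> Lam"
  shows "\<exists>c. c \<noteq> 0 \<and> wL w1 w2 pc y be l ** wV w1 w2 ep ga x l = c *\<^sub>m (wV w1 w2 ep gd z l ** wL w1 w2 pa x be l)"
proof -
  define C where "C = exp pc"
  define a where "a = exp pa"
  define b where "b = exp (ep * ga)"
  define d where "d = exp (ep * gd)"
  have nzC: "C \<noteq> 0" "a \<noteq> 0" "b \<noteq> 0" "d \<noteq> 0" by (simp_all add: C_def a_def b_def d_def)
  define A1 where "A1 = sig (x + y + ep)"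
  define A2 where "A2 = sig (x - y + ep)"
  define A3 where "A3 = sig (x + y - ep)"
  define A4 where "A4 = sig (x - y - ep)"
  define B1 where "B1 = sig (y + z + (be - ep))"
  define B2 where "B2 = sig (y - z + (be - ep))"
  define B3 where "B3 = sig (y + z - (be - ep))"
  define B4 where "B4 = sig (y - z - (be - ep))"
  define D1 where "D1 = sig (x + z + be)"
  define D2 where "D2 = sig (x - z + be)"
  define D3 where "D3 = sig (x + z - be)"
  define D4 where "D4 = sig (x - z - be)"
  define X where "X = sig (2*x)"
  define Y where "Y = sig (2*y)"
  define Z where "Z = sig (2*z)"
  define Lm where "Lm = sig (2*l)"
  define LE where "LE = sig (2*l - 2*ep)"
  define U1 where "U1 = sig (x - y + 2*l - ep)"
  define U2 where "U2 = sig (x + y + 2*l - ep)"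
  define U3 where "U3 = sig (x + y - 2*l + ep)"
  define U4 where "U4 = sig (x - y - 2*l + ep)"
  define V1 where "V1 = sig (y + z + 2*l - be - ep)"
  define V2 where "V2 = sig (y - z - 2*l + be + ep)"
  define V3 where "V3 = sig (y - z + 2*l - be - ep)"
  define V4 where "V4 = sig (y + z - 2*l + be + ep)"
  define W1 where "W1 = sig (x + z + 2*l - be)"
  define W2 where "W2 = sig (x - z + 2*l - be)"
  define W3 where "W3 = sig (x + z - 2*l + be)"
  define W4 where "W4 = sig (x - z - 2*l + be)"
  have nzA: "A1 \<noteq> 0" "A2 \<noteq> 0" "A3 \<noteq> 0" "A4 \<noteq> 0"
    using okA by (simp_all add: wF_ok_def A1_def A2_def A3_def A4_def)
  have nzB: "B1 \<noteq> 0" "B2 \<noteq> 0" "B3 \<noteq> 0" "B4 \<noteq> 0"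
    using okB by (simp_all add: wF_ok_def B1_def B2_def B3_def B4_def)
  have nzD: "D1 \<noteq> 0" "D2 \<noteq> 0" "D3 \<noteq> 0" "D4 \<noteq> 0"
    using okD by (simp_all add: wF_ok_def D1_def D2_def D3_def D4_def)
  have nzX: "X \<noteq> 0" "Y \<noteq> 0" "Z \<noteq> 0" using X0 Y0 Z0 by (simp_all add: X_def Y_def Z_def)
  have nzL: "Lm \<noteq> 0" "LE \<noteq> 0" using sig_nz[OF gl(19)] sig_nz[OF gl(20)] by (simp_all add: Lm_def LE_def)
  have Fyx: "wF w1 w2 y x ep = (A1 * (- A4)) / (A3 * (- A2))"
  proof -
    have "sig (y + x + ep) = A1" unfolding A1_def by (rule sigeq) (simp add: algebra_simps)
    moreover have "sig (y - x + ep) = - A4" unfolding A4_def by (rule signeg) (simp add: algebra_simps)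
    moreover have "sig (y + x - ep) = A3" unfolding A3_def by (rule sigeq) (simp add: algebra_simps)
    moreover have "sig (y - x - ep) = - A2" unfolding A2_def by (rule signeg) (simp add: algebra_simps)
    ultimately show ?thesis by (simp add: wF_def)
  qed
  have Fyz: "wF w1 w2 y z (be - ep) = B1 * B2 / (B3 * B4)"
    by (simp add: wF_def B1_def B2_def B3_def B4_def)
  have Fzx: "wF w1 w2 z x be = (D1 * (- D4)) / (D3 * (- D2))"
  proof -
    have "sig (z + x + be) = D1" unfolding D1_def by (rule sigeq) (simp add: algebra_simps)
    moreover have "sig (z - x + be) = - D4" unfolding D4_def by (rule signeg) (simp add: algebra_simps)
    moreover have "sig (z + x - be) = D3" unfolding D3_def by (rule sigeq) (simp add: algebra_simps)
    moreover have "sig (z - x - be) = - D2" unfolding D2_def by (rule signeg) (simp add: algebra_simps)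
    ultimately show ?thesis by (simp add: wF_def)
  qed
  have Fzy: "wF w1 w2 z y (be - ep) = (B1 * (- B4)) / (B3 * (- B2))"
  proof -
    have "sig (z + y + (be - ep)) = B1" unfolding B1_def by (rule sigeq) (simp add: algebra_simps)
    moreover have "sig (z - y + (be - ep)) = - B4" unfolding B4_def by (rule signeg) (simp add: algebra_simps)
    moreover have "sig (z + y - (be - ep)) = B3" unfolding B3_def by (rule sigeq) (simp add: algebra_simps)
    moreover have "sig (z - y - (be - ep)) = - B2" unfolding B2_def by (rule signeg) (simp add: algebra_simps)
    ultimately show ?thesis by (simp add: wF_def)
  qed
  have Fxy: "wF w1 w2 x y ep = A1 * A2 / (A3 * A4)" by (simp add: wF_def A1_def A2_def A3_def A4_def)
  have Fxz: "wF w1 w2 x z be = D1 * D2 / (D3 * D4)" by (simp add: wF_def D1_def D2_def D3_def D4_def)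
  have C2': "C\<^sup>2 = A1*A4*B1*B2/(A3*A2*B3*B4)"
    using C2 unfolding C_def[symmetric] Fyx Fyz using nzA nzB by (simp add: field_simps)
  have d2': "d\<^sup>2 = D1*D4*B3*B2/(D3*D2*B1*B4)"
    using d2 unfolding d_def[symmetric] Fzx Fzy using nzD nzB by (simp add: field_simps)
  have ba': "b\<^sup>2 / a\<^sup>2 = (A1*A2/(A3*A4)) * (D3*D4/(D1*D2))"
    using ab unfolding a_def[symmetric] b_def[symmetric] Fxy Fxz using nzA nzD nzC by (simp add: field_simps)
  define R0 where "R0 = A4*B1*D2/(A2*B3*D4)"
  have R0nz: "R0 \<noteq> 0" using nzA nzB nzD by (simp add: R0_def)
  define s where "s = C * a / (R0 * b * d)"
  have sg1: "C * a = s * R0 * b * d" using R0nz nzC by (simp add: s_def field_simps)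
  have sg2: "s * s = 1"
  proof -
    have "a\<^sup>2 = b\<^sup>2 / ((A1*A2/(A3*A4)) * (D3*D4/(D1*D2)))"
      using ba' nzC nzA nzD by (simp add: field_simps)
    hence "s * s = (C\<^sup>2 * (b\<^sup>2 / ((A1*A2/(A3*A4)) * (D3*D4/(D1*D2))))) / (R0\<^sup>2 * b\<^sup>2 * d\<^sup>2)"
      by (simp add: s_def power2_eq_square field_simps)
    also have "\<dots> = 1"
      unfolding C2' d2' R0_def using nzA nzB nzD nzC by (simp add: field_simps power2_eq_square)
    finally show ?thesis .
  qed
  have e1: "br (x + l - ep) (y - l) = A3 * U1"
    by (rule br_eq) (unfold A3_def U1_def, (rule sigeq, simp add: algebra_simps)+)
  have e2: "br (x + l - ep) (y + l) = U2 * A4"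
    by (rule br_eq) (unfold U2_def A4_def, (rule sigeq, simp add: algebra_simps)+)
  have e3: "br (x - l + ep) (y - l) = U3 * A2"
    by (rule br_eq) (unfold U3_def A2_def, (rule sigeq, simp add: algebra_simps)+)
  have e4: "br (x - l + ep) (y + l) = A1 * U4"
    by (rule br_eq) (unfold A1_def U4_def, (rule sigeq, simp add: algebra_simps)+)
  have f1: "br (x + l - be) (z - l) = D3 * W2"
    by (rule br_eq) (unfold D3_def W2_def, (rule sigeq, simp add: algebra_simps)+)
  have f2: "br (x + l - be) (z + l) = W1 * D4"
    by (rule br_eq) (unfold W1_def D4_def, (rule sigeq, simp add: algebra_simps)+)
  have f3: "br (x - l + be) (z - l) = W3 * D2"
    by (rule br_eq) (unfold W3_def D2_def, (rule sigeq, simp add: algebra_simps)+)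
  have f4: "br (x - l + be) (z + l) = D1 * W4"
    by (rule br_eq) (unfold D1_def W4_def, (rule sigeq, simp add: algebra_simps)+)
  have g11: "br (y + l - be) (z + l - ep) = V1 * B4"
    by (rule br_eq) (unfold V1_def B4_def, (rule sigeq, simp add: algebra_simps)+)
  have g21: "br (y - l + be) (z + l - ep) = B1 * V2"
    by (rule br_eq) (unfold B1_def V2_def, (rule sigeq, simp add: algebra_simps)+)
  have g12: "br (y + l - be) (z - l + ep) = B3 * V3"
    by (rule br_eq) (unfold B3_def V3_def, (rule sigeq, simp add: algebra_simps)+)
  have g22: "br (y - l + be) (z - l + ep) = V4 * B2"
    by (rule br_eq) (unfold V4_def B2_def, (rule sigeq, simp add: algebra_simps)+)
  have h11: "br (z + l - ep) (z + l - ep) = 0" by (simp add: br_def sig_0)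
  have h22: "br (z - l + ep) (z - l + ep) = 0" by (simp add: br_def sig_0)
  have h21: "br (z - l + ep) (z + l - ep) = Z * (- LE)"
  proof (rule br_eq)
    show "sig (z - l + ep + (z + l - ep)) = Z" unfolding Z_def by (rule sigeq) (simp add: algebra_simps)
    show "sig (z - l + ep - (z + l - ep)) = - LE" unfolding LE_def by (rule signeg) (simp add: algebra_simps)
  qed
  have h12: "br (z + l - ep) (z - l + ep) = Z * LE"
    by (rule br_eq) (unfold Z_def LE_def, (rule sigeq, simp add: algebra_simps)+)
  have t_ab1: "br (x + l) (y - l + ep) = A1 * U1"
    by (rule br_eq) (unfold A1_def U1_def, (rule sigeq, simp add: algebra_simps)+)
  have t_ab3: "br (x - l) (y - l + ep) = U3 * A4"
    by (rule br_eq) (unfold U3_def A4_def, (rule sigeq, simp add: algebra_simps)+)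
  have t_cd1: "br (y + l - ep) (z + l - be) = V1 * B2"
    by (rule br_eq) (unfold V1_def B2_def, (rule sigeq, simp add: algebra_simps)+)
  have t_cd2: "br (y + l - ep) (z - l + be) = B1 * V3"
    by (rule br_eq) (unfold B1_def V3_def, (rule sigeq, simp add: algebra_simps)+)
  have t_ac1: "br (x + l) (y + l - ep) = U2 * A2"
    by (rule br_eq) (unfold U2_def A2_def, (rule sigeq, simp add: algebra_simps)+)
  have t_ac3: "br (x - l) (y + l - ep) = A3 * U4"
    by (rule br_eq) (unfold A3_def U4_def, (rule sigeq, simp add: algebra_simps)+)
  have t_db1: "br (z + l - be) (y - l + ep) = B3 * (- V2)"
  proof (rule br_eq)
    show "sig (z + l - be + (y - l + ep)) = B3" unfolding B3_def by (rule sigeq) (simp add: algebra_simps)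
    show "sig (z + l - be - (y - l + ep)) = - V2" unfolding V2_def by (rule signeg) (simp add: algebra_simps)
  qed
  have t_db2: "br (z - l + be) (y - l + ep) = V4 * (- B4)"
  proof (rule br_eq)
    show "sig (z - l + be + (y - l + ep)) = V4" unfolding V4_def by (rule sigeq) (simp add: algebra_simps)
    show "sig (z - l + be - (y - l + ep)) = - B4" unfolding B4_def by (rule signeg) (simp add: algebra_simps)
  qed
  have t_ad1: "br (x + l) (z + l - be) = W1 * D2"
    by (rule br_eq) (unfold W1_def D2_def, (rule sigeq, simp add: algebra_simps)+)
  have t_ad2: "br (x + l) (z - l + be) = D1 * W2"
    by (rule br_eq) (unfold D1_def W2_def, (rule sigeq, simp add: algebra_simps)+)
  have t_ad3: "br (x - l) (z + l - be) = D3 * W4"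
    by (rule br_eq) (unfold D3_def W4_def, (rule sigeq, simp add: algebra_simps)+)
  have t_ad4: "br (x - l) (z - l + be) = W3 * D4"
    by (rule br_eq) (unfold W3_def D4_def, (rule sigeq, simp add: algebra_simps)+)
  have t_bc: "br (y - l + ep) (y + l - ep) = Y * (- LE)"
  proof (rule br_eq)
    show "sig (y - l + ep + (y + l - ep)) = Y" unfolding Y_def by (rule sigeq) (simp add: algebra_simps)
    show "sig (y - l + ep - (y + l - ep)) = - LE" unfolding LE_def by (rule signeg) (simp add: algebra_simps)
  qed
  have TT1: "A1*U1*V1*B2 - U2*A2*B3*V2 - W1*D2*Y*LE = 0"
    using three_term[OF gl(1) gl(3) gl(4) gl(5)] unfolding t_ab1 t_cd1 t_ac1 t_db1 t_ad1 t_bc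
    by (simp add: algebra_simps)
  have TT2: "A1*U1*B1*V3 - U2*A2*V4*B4 - D1*W2*Y*LE = 0"
    using three_term[OF gl(1) gl(3) gl(4) gl(6)] unfolding t_ab1 t_cd2 t_ac1 t_db2 t_ad2 t_bc
    by (simp add: algebra_simps)
  have TT3: "U3*A4*V1*B2 - A3*U4*B3*V2 - D3*W4*Y*LE = 0"
    using three_term[OF gl(2) gl(3) gl(4) gl(5)] unfolding t_ab3 t_cd1 t_ac3 t_db1 t_ad3 t_bc
    by (simp add: algebra_simps)
  have TT4: "U3*A4*B1*V3 - A3*U4*V4*B4 - W3*D4*Y*LE = 0"
    using three_term[OF gl(2) gl(3) gl(4) gl(6)] unfolding t_ab3 t_cd2 t_ac3 t_db2 t_ad4 t_bc
    by (simp add: algebra_simps)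
  have I1: "C\<^sup>2 * ((A3*U1) * (V1*B4)) - (U2*A4) * (B1*V2) = Y * R0 * (W1*D4) * LE"
    using I1_abs[where ?A4.0 = A4 and ?B1.0 = B1, OF TT1 nzA(2) nzA(3) nzB(3) nzB(4) nzD(4)] unfolding C2' R0_def by (simp add: mult_ac)
  have I2: "C\<^sup>2 * ((A3*U1) * (B3*V3)) - (U2*A4) * (V4*B2) = Y * R0 * d\<^sup>2 * (D3*W2) * LE"
    using I2_abs[where ?A4.0 = A4, OF TT2 nzA(2) nzA(3) nzB nzD(2) nzD(3) nzD(4)] unfolding C2' R0_def d2' by (simp add: mult_ac)
  have I3: "- C\<^sup>2 * ((U3*A2) * (V1*B4)) + (A1*U4) * (B1*V2) = - Y * R0 * (b\<^sup>2 / a\<^sup>2) * (D1*W4) * LE"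
    using I3_abs[where ?B1.0 = B1, OF TT3 nzA nzB(3) nzB(4) nzD(1) nzD(2) nzD(4)] unfolding C2' R0_def ba' by (simp add: mult_ac)
  have I4: "- C\<^sup>2 * ((U3*A2) * (B3*V3)) + (A1*U4) * (V4*B2) = - Y * R0 * (b\<^sup>2 / a\<^sup>2) * d\<^sup>2 * (W3*D2) * LE"
    using I4_abs[OF TT4 nzA nzB nzD] unfolding C2' R0_def ba' d2' by (simp add: mult_ac)
  note nz8 = nzC(1) nzC(2) nzC(3) nzC(4) nzX(1) nzX(2) nzX(3) nzL(1)
  have E1: "(C/(Y*Lm)) * (b/(X*Lm)) * (A3*U1) * (V1*B4) + (-1/(C*Y*Lm)) * (b/(X*Lm)) * (U2*A4) * (B1*V2) =
    s * ((d/(Z*Lm)) * (a/(X*Lm)) * (D3*W2) * 0 + (-1/(d*Z*Lm)) * (a/(X*Lm)) * (W1*D4) * (-(Z*LE)))"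
    by (rule E1_abs[OF I1 sg1 sg2 nz8])
  have E2: "(C/(Y*Lm)) * (b/(X*Lm)) * (A3*U1) * (B3*V3) + (-1/(C*Y*Lm)) * (b/(X*Lm)) * (U2*A4) * (V4*B2) =
    s * ((d/(Z*Lm)) * (a/(X*Lm)) * (D3*W2) * (Z*LE) + (-1/(d*Z*Lm)) * (a/(X*Lm)) * (W1*D4) * 0)"
    by (rule E2_abs[OF I2 sg1 sg2 nz8])
  have E3: "(C/(Y*Lm)) * (-1/(b*X*Lm)) * (U3*A2) * (V1*B4) + (-1/(C*Y*Lm)) * (-1/(b*X*Lm)) * (A1*U4) * (B1*V2) =
    s * ((d/(Z*Lm)) * (-1/(a*X*Lm)) * (W3*D2) * 0 + (-1/(d*Z*Lm)) * (-1/(a*X*Lm)) * (D1*W4) * (-(Z*LE)))"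
    by (rule E3_abs[OF I3 sg1 sg2 nz8])
  have E4: "(C/(Y*Lm)) * (-1/(b*X*Lm)) * (U3*A2) * (B3*V3) + (-1/(C*Y*Lm)) * (-1/(b*X*Lm)) * (A1*U4) * (V4*B2) =
    s * ((d/(Z*Lm)) * (-1/(a*X*Lm)) * (W3*D2) * (Z*LE) + (-1/(d*Z*Lm)) * (-1/(a*X*Lm)) * (D1*W4) * 0)"
    by (rule E4_abs[OF I4 sg1 sg2 nz8])
  have d_e1: "r1 (y - l) * c1 (x + l - ep) + r2 (y - l) * c2 (x + l - ep) = A3 * U1" using dot_br'[OF gl(7) gl(11)] e1 by simp
  have d_e2: "r1 (y + l) * c1 (x + l - ep) + r2 (y + l) * c2 (x + l - ep) = U2 * A4" using dot_br'[OF gl(7) gl(12)] e2 by simp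
  have d_e3: "r1 (y - l) * c1 (x - l + ep) + r2 (y - l) * c2 (x - l + ep) = U3 * A2" using dot_br'[OF gl(8) gl(11)] e3 by simp
  have d_e4: "r1 (y + l) * c1 (x - l + ep) + r2 (y + l) * c2 (x - l + ep) = A1 * U4" using dot_br'[OF gl(8) gl(12)] e4 by simp
  have d_f1: "r1 (z - l) * c1 (x + l - be) + r2 (z - l) * c2 (x + l - be) = D3 * W2" using dot_br'[OF gl(9) gl(13)] f1 by simp
  have d_f2: "r1 (z + l) * c1 (x + l - be) + r2 (z + l) * c2 (x + l - be) = W1 * D4" using dot_br'[OF gl(9) gl(14)] f2 by simp
  have d_f3: "r1 (z - l) * c1 (x - l + be) + r2 (z - l) * c2 (x - l + be) = W3 * D2" using dot_br'[OF gl(10) gl(13)] f3 by simp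
  have d_f4: "r1 (z + l) * c1 (x - l + be) + r2 (z + l) * c2 (x - l + be) = D1 * W4" using dot_br'[OF gl(10) gl(14)] f4 by simp
  have p_g11: "r1 (z + l - ep) * c1 (y + l - be) + r2 (z + l - ep) * c2 (y + l - be) = V1 * B4" using dot_br'[OF gl(15) gl(17)] g11 by simp
  have p_g21: "r1 (z + l - ep) * c1 (y - l + be) + r2 (z + l - ep) * c2 (y - l + be) = B1 * V2" using dot_br'[OF gl(16) gl(17)] g21 by simp
  have p_g12: "r1 (z - l + ep) * c1 (y + l - be) + r2 (z - l + ep) * c2 (y + l - be) = B3 * V3" using dot_br'[OF gl(15) gl(18)] g12 by simp
  have p_g22: "r1 (z - l + ep) * c1 (y - l + be) + r2 (z - l + ep) * c2 (y - l + be) = V4 * B2" using dot_br'[OF gl(16) gl(18)] g22 by simp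
  have p_h11: "r1 (z + l - ep) * c1 (z + l - ep) + r2 (z + l - ep) * c2 (z + l - ep) = 0" using dot_br'[OF gl(17) gl(17)] h11 by simp
  have p_h21: "r1 (z + l - ep) * c1 (z - l + ep) + r2 (z + l - ep) * c2 (z - l + ep) = Z * (- LE)" using dot_br'[OF gl(18) gl(17)] h21 by simp
  have p_h12: "r1 (z - l + ep) * c1 (z + l - ep) + r2 (z - l + ep) * c2 (z + l - ep) = Z * LE" using dot_br'[OF gl(17) gl(18)] h12 by simp
  have p_h22: "r1 (z - l + ep) * c1 (z - l + ep) + r2 (z - l + ep) * c2 (z - l + ep) = 0" using dot_br'[OF gl(18) gl(18)] h22 by simp
  have det: "r1 (z + l - ep) * r2 (z - l + ep) - r2 (z + l - ep) * r1 (z - l + ep) \<noteq> 0"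
  proof -
    have "r1 (z + l - ep) * r2 (z - l + ep) - r2 (z + l - ep) * r1 (z - l + ep) =
          r1 (z + l - ep) * c1 (z - l + ep) + r2 (z + l - ep) * c2 (z - l + ep)"
      by (simp add: r1_def r2_def c1_def c2_def algebra_simps)
    also have "\<dots> = Z * (- LE)" by (rule p_h21)
    finally show ?thesis using nzX nzL by simp
  qed
  define K1 where "K1 = exp pc * (1 / (sig (2*y) * sig (2*l)))"
  define K2 where "K2 = exp (- pc) * (- 1 / (sig (2*y) * sig (2*l)))"
  define K3 where "K3 = exp (ep * ga) * (1 / (sig (2*x) * sig (2*l)))"
  define K4 where "K4 = exp (- (ep * ga)) * (- 1 / (sig (2*x) * sig (2*l)))"
  define K5 where "K5 = exp (ep * gd) * (1 / (sig (2*z) * sig (2*l)))"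
  define K6 where "K6 = exp (- (ep * gd)) * (- 1 / (sig (2*z) * sig (2*l)))"
  define K7 where "K7 = exp pa * (1 / (sig (2*x) * sig (2*l)))"
  define K8 where "K8 = exp (- pa) * (- 1 / (sig (2*x) * sig (2*l)))"
  have kk: "K1 * K3 = (C/(Y*Lm)) * (b/(X*Lm))" "K2 * K3 = (-1/(C*Y*Lm)) * (b/(X*Lm))"
     "K1 * K4 = (C/(Y*Lm)) * (-1/(b*X*Lm))" "K2 * K4 = (-1/(C*Y*Lm)) * (-1/(b*X*Lm))"
     "K5 * K7 = (d/(Z*Lm)) * (a/(X*Lm))" "K6 * K7 = (-1/(d*Z*Lm)) * (a/(X*Lm))"
     "K5 * K8 = (d/(Z*Lm)) * (-1/(a*X*Lm))" "K6 * K8 = (-1/(d*Z*Lm)) * (-1/(a*X*Lm))"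
    unfolding K1_def K2_def K3_def K4_def K5_def K6_def K7_def K8_def C_def a_def b_def d_def
      X_def Y_def Z_def Lm_def
    by (simp_all add: exp_minus field_simps)
  define P1 where "P1 = K1 * K3 * (A3 * U1)"
  define P2 where "P2 = K2 * K3 * (U2 * A4)"
  define P3 where "P3 = K1 * K4 * (U3 * A2)"
  define P4 where "P4 = K2 * K4 * (A1 * U4)"
  define Q1 where "Q1 = K5 * K7 * (D3 * W2)"
  define Q2 where "Q2 = K6 * K7 * (W1 * D4)"
  define Q3 where "Q3 = K5 * K8 * (W3 * D2)"
  define Q4 where "Q4 = K6 * K8 * (D1 * W4)"
  have LHS: "wL w1 w2 pc y be l ** wV w1 w2 ep ga x l =
     OM 1 (P1 * c1 (y + l - be) + P2 * c1 (y - l + be)) (P1 * c2 (y + l - be) + P2 * c2 (y - l + be)) (r1 (x - l)) (r2 (x - l)) +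
     OM 1 (P3 * c1 (y + l - be) + P4 * c1 (y - l + be)) (P3 * c2 (y + l - be) + P4 * c2 (y - l + be)) (r1 (x + l)) (r2 (x + l))"
    unfolding wL_OM wV_OM prod_form d_e1 d_e2 d_e3 d_e4 P1_def P2_def P3_def P4_def
      K1_def[symmetric] K2_def[symmetric] K3_def[symmetric] K4_def[symmetric] ..
  have RHS: "wV w1 w2 ep gd z l ** wL w1 w2 pa x be l =
     OM 1 (Q1 * c1 (z + l - ep) + Q2 * c1 (z - l + ep)) (Q1 * c2 (z + l - ep) + Q2 * c2 (z - l + ep)) (r1 (x - l)) (r2 (x - l)) +
     OM 1 (Q3 * c1 (z + l - ep) + Q4 * c1 (z - l + ep)) (Q3 * c2 (z + l - ep) + Q4 * c2 (z - l + ep)) (r1 (x + l)) (r2 (x + l))"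
    unfolding wL_OM wV_OM prod_form d_f1 d_f2 d_f3 d_f4 Q1_def Q2_def Q3_def Q4_def
      K5_def[symmetric] K6_def[symmetric] K7_def[symmetric] K8_def[symmetric] ..
  have row1: "P1 * c1 (y + l - be) + P2 * c1 (y - l + be) = s * (Q1 * c1 (z + l - ep) + Q2 * c1 (z - l + ep)) \<and>
              P1 * c2 (y + l - be) + P2 * c2 (y - l + be) = s * (Q1 * c2 (z + l - ep) + Q2 * c2 (z - l + ep))"
  proof (rule pair_eq[OF _ _ det])
    have "r1 (z + l - ep) * (P1 * c1 (y + l - be) + P2 * c1 (y - l + be)) + r2 (z + l - ep) * (P1 * c2 (y + l - be) + P2 * c2 (y - l + be)) =
          P1 * (r1 (z + l - ep) * c1 (y + l - be) + r2 (z + l - ep) * c2 (y + l - be)) + P2 * (r1 (z + l - ep) * c1 (y - l + be) + r2 (z + l - ep) * c2 (y - l + be))"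
      by (rule pex)
    also have "\<dots> = s * (Q1 * (r1 (z + l - ep) * c1 (z + l - ep) + r2 (z + l - ep) * c2 (z + l - ep)) + Q2 * (r1 (z + l - ep) * c1 (z - l + ep) + r2 (z + l - ep) * c2 (z - l + ep)))"
      unfolding p_g11 p_g21 p_h11 p_h21 P1_def P2_def Q1_def Q2_def using E1 unfolding kk[symmetric] by (simp add: mult_ac)
    also have "\<dots> = r1 (z + l - ep) * (s * (Q1 * c1 (z + l - ep) + Q2 * c1 (z - l + ep))) + r2 (z + l - ep) * (s * (Q1 * c2 (z + l - ep) + Q2 * c2 (z - l + ep)))"
      by (rule pex_s[symmetric])
    finally show "r1 (z + l - ep) * (P1 * c1 (y + l - be) + P2 * c1 (y - l + be)) + r2 (z + l - ep) * (P1 * c2 (y + l - be) + P2 * c2 (y - l + be)) =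
          r1 (z + l - ep) * (s * (Q1 * c1 (z + l - ep) + Q2 * c1 (z - l + ep))) + r2 (z + l - ep) * (s * (Q1 * c2 (z + l - ep) + Q2 * c2 (z - l + ep)))" .
    have "r1 (z - l + ep) * (P1 * c1 (y + l - be) + P2 * c1 (y - l + be)) + r2 (z - l + ep) * (P1 * c2 (y + l - be) + P2 * c2 (y - l + be)) =
          P1 * (r1 (z - l + ep) * c1 (y + l - be) + r2 (z - l + ep) * c2 (y + l - be)) + P2 * (r1 (z - l + ep) * c1 (y - l + be) + r2 (z - l + ep) * c2 (y - l + be))"
      by (rule pex)
    also have "\<dots> = s * (Q1 * (r1 (z - l + ep) * c1 (z + l - ep) + r2 (z - l + ep) * c2 (z + l - ep)) + Q2 * (r1 (z - l + ep) * c1 (z - l + ep) + r2 (z - l + ep) * c2 (z - l + ep)))"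
      unfolding p_g12 p_g22 p_h12 p_h22 P1_def P2_def Q1_def Q2_def using E2 unfolding kk[symmetric] by (simp add: mult_ac)
    also have "\<dots> = r1 (z - l + ep) * (s * (Q1 * c1 (z + l - ep) + Q2 * c1 (z - l + ep))) + r2 (z - l + ep) * (s * (Q1 * c2 (z + l - ep) + Q2 * c2 (z - l + ep)))"
      by (rule pex_s[symmetric])
    finally show "r1 (z - l + ep) * (P1 * c1 (y + l - be) + P2 * c1 (y - l + be)) + r2 (z - l + ep) * (P1 * c2 (y + l - be) + P2 * c2 (y - l + be)) =
          r1 (z - l + ep) * (s * (Q1 * c1 (z + l - ep) + Q2 * c1 (z - l + ep))) + r2 (z - l + ep) * (s * (Q1 * c2 (z + l - ep) + Q2 * c2 (z - l + ep)))" .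
  qed
  have row2: "P3 * c1 (y + l - be) + P4 * c1 (y - l + be) = s * (Q3 * c1 (z + l - ep) + Q4 * c1 (z - l + ep)) \<and>
              P3 * c2 (y + l - be) + P4 * c2 (y - l + be) = s * (Q3 * c2 (z + l - ep) + Q4 * c2 (z - l + ep))"
  proof (rule pair_eq[OF _ _ det])
    have "r1 (z + l - ep) * (P3 * c1 (y + l - be) + P4 * c1 (y - l + be)) + r2 (z + l - ep) * (P3 * c2 (y + l - be) + P4 * c2 (y - l + be)) =
          P3 * (r1 (z + l - ep) * c1 (y + l - be) + r2 (z + l - ep) * c2 (y + l - be)) + P4 * (r1 (z + l - ep) * c1 (y - l + be) + r2 (z + l - ep) * c2 (y - l + be))"
      by (rule pex)
    also have "\<dots> = s * (Q3 * (r1 (z + l - ep) * c1 (z + l - ep) + r2 (z + l - ep) * c2 (z + l - ep)) + Q4 * (r1 (z + l - ep) * c1 (z - l + ep) + r2 (z + l - ep) * c2 (z - l + ep)))"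
      unfolding p_g11 p_g21 p_h11 p_h21 P3_def P4_def Q3_def Q4_def using E3 unfolding kk[symmetric] by (simp add: mult_ac)
    also have "\<dots> = r1 (z + l - ep) * (s * (Q3 * c1 (z + l - ep) + Q4 * c1 (z - l + ep))) + r2 (z + l - ep) * (s * (Q3 * c2 (z + l - ep) + Q4 * c2 (z - l + ep)))"
      by (rule pex_s[symmetric])
    finally show "r1 (z + l - ep) * (P3 * c1 (y + l - be) + P4 * c1 (y - l + be)) + r2 (z + l - ep) * (P3 * c2 (y + l - be) + P4 * c2 (y - l + be)) =
          r1 (z + l - ep) * (s * (Q3 * c1 (z + l - ep) + Q4 * c1 (z - l + ep))) + r2 (z + l - ep) * (s * (Q3 * c2 (z + l - ep) + Q4 * c2 (z - l + ep)))" .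
    have "r1 (z - l + ep) * (P3 * c1 (y + l - be) + P4 * c1 (y - l + be)) + r2 (z - l + ep) * (P3 * c2 (y + l - be) + P4 * c2 (y - l + be)) =
          P3 * (r1 (z - l + ep) * c1 (y + l - be) + r2 (z - l + ep) * c2 (y + l - be)) + P4 * (r1 (z - l + ep) * c1 (y - l + be) + r2 (z - l + ep) * c2 (y - l + be))"
      by (rule pex)
    also have "\<dots> = s * (Q3 * (r1 (z - l + ep) * c1 (z + l - ep) + r2 (z - l + ep) * c2 (z + l - ep)) + Q4 * (r1 (z - l + ep) * c1 (z - l + ep) + r2 (z - l + ep) * c2 (z - l + ep)))"
      unfolding p_g12 p_g22 p_h12 p_h22 P3_def P4_def Q3_def Q4_def using E4 unfolding kk[symmetric] by (simp add: mult_ac)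
    also have "\<dots> = r1 (z - l + ep) * (s * (Q3 * c1 (z + l - ep) + Q4 * c1 (z - l + ep))) + r2 (z - l + ep) * (s * (Q3 * c2 (z + l - ep) + Q4 * c2 (z - l + ep)))"
      by (rule pex_s[symmetric])
    finally show "r1 (z - l + ep) * (P3 * c1 (y + l - be) + P4 * c1 (y - l + be)) + r2 (z - l + ep) * (P3 * c2 (y + l - be) + P4 * c2 (y - l + be)) =
          r1 (z - l + ep) * (s * (Q3 * c1 (z + l - ep) + Q4 * c1 (z - l + ep))) + r2 (z - l + ep) * (s * (Q3 * c2 (z + l - ep) + Q4 * c2 (z - l + ep)))" .
  qed
  have s0: "s \<noteq> 0" using sg2 by auto
  have "wL w1 w2 pc y be l ** wV w1 w2 ep ga x l = s *\<^sub>m (wV w1 w2 ep gd z l ** wL w1 w2 pa x be l)"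
    unfolding LHS RHS by (rule OM_final) (use row1 row2 in auto)
  thus ?thesis using s0 by blast
qed

end


context wlat
begin

lemma sparse_lin:
  fixes \<alpha> c :: complex
  assumes a: "\<alpha> \<noteq> 0"
  shows "{l. \<alpha> * l + c \<in> Lam} sparse_in UNIV"
proof -
  define T where "T = {l. \<alpha> * l + c \<in> Lam}"
  define \<delta> where "\<delta> = dl / norm \<alpha>"
  have \<delta>: "\<delta> > 0" using dl_pos a by (simp add: \<delta>_def)
  have sep: "dist l1 l2 \<ge> \<delta>" if "l1 \<in> T" "l2 \<in> T" "l1 \<noteq> l2" for l1 l2
  proof -
    have ne: "\<alpha> * l1 + c \<noteq> \<alpha> * l2 + c" using that(3) a by simp
    have "dl \<le> dist (\<alpha> * l1 + c) (\<alpha> * l2 + c)" using Lam_dist[OF _ _ ne] that(1,2) by (simp add: T_def)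
    also have "\<dots> = norm \<alpha> * dist l1 l2"
    proof -
      have "\<alpha> * l1 + c - (\<alpha> * l2 + c) = \<alpha> * (l1 - l2)" by (simp add: algebra_simps)
      thus ?thesis by (simp only: dist_norm norm_mult)
    qed
    finally have cal: "dl \<le> norm \<alpha> * dist l1 l2" .
    have na: "norm \<alpha> > 0" using a by simp
    show ?thesis unfolding \<delta>_def pos_divide_le_eq[OF na] using cal by (simp only: mult.commute)
  qed
  have "\<not> y islimpt T" for y
  proof
    assume "y islimpt T"
    then obtain x1 where x1: "x1 \<in> T" "x1 \<noteq> y" "dist x1 y < \<delta> / 2"
      using \<delta> by (meson half_gt_zero islimpt_approachable)
    have "dist x1 y > 0" using x1(2) by simp
    hence m: "min (\<delta> / 2) (dist x1 y) > 0" using \<delta> by simp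
    obtain x2 where x2: "x2 \<in> T" "x2 \<noteq> y" "dist x2 y < min (\<delta> / 2) (dist x1 y)"
      using \<open>y islimpt T\<close> m unfolding islimpt_approachable by blast
    have x2a: "dist x2 y < \<delta> / 2" and x2b: "dist x2 y < dist x1 y" using x2(3) by simp_all
    have ne: "x1 \<noteq> x2" using x2b by auto
    have "dist x1 x2 \<le> dist x1 y + dist y x2" by (rule dist_triangle)
    moreover have "dist y x2 = dist x2 y" by (rule dist_commute)
    ultimately have "dist x1 x2 < \<delta>" using x1(3) x2a by linarith
    thus False using sep[OF x1(1) x2(1) ne] by linarith
  qed
  thus ?thesis unfolding T_def[symmetric] sparse_in_open[OF open_UNIV] by blast
qed

lemma sparse_pt:
  fixes \<alpha> c :: complex
  assumes "\<And>l. f l = \<alpha> * l + c" "\<alpha> \<noteq> 0"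
  shows "{l. f l \<in> Lam} sparse_in UNIV"
proof -
  have "{l. f l \<in> Lam} = {l. \<alpha> * l + c \<in> Lam}" using assms(1) by auto
  thus ?thesis using sparse_lin[OF assms(2), of c] by simp
qed

end

lemma wF_nz: "wF_ok w1 w2 x0 x1 a \<Longrightarrow> wF w1 w2 x0 x1 a \<noteq> 0"
  unfolding wF_ok_def wF_def by simp

lemma exp_sq: "(exp p)\<^sup>2 = exp (2 * p)" for p :: complex
proof -
  have "exp (2 * p) = exp (p + p)" by (simp only: mult_2)
  also have "\<dots> = exp p * exp p" by (rule exp_add)
  finally show ?thesis by (simp only: power2_eq_square)
qed


context wlat
begin

definition bad :: "complex \<Rightarrow> complex \<Rightarrow> complex \<Rightarrow> complex \<Rightarrow> complex \<Rightarrow> complex set" where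
  "bad x y z be ep = (
    {l. x + l \<in> Lam} \<union>
    {l. x - l \<in> Lam} \<union>
    {l. y - l + ep \<in> Lam} \<union>
    {l. y + l - ep \<in> Lam} \<union>
    {l. z + l - be \<in> Lam} \<union>
    {l. z - l + be \<in> Lam} \<union>
    {l. x + l - ep \<in> Lam} \<union>
    {l. x - l + ep \<in> Lam} \<union>
    {l. x + l - be \<in> Lam} \<union>
    {l. x - l + be \<in> Lam} \<union>
    {l. y - l \<in> Lam} \<union>
    {l. y + l \<in> Lam} \<union>
    {l. z - l \<in> Lam} \<union>
    {l. z + l \<in> Lam} \<union>
    {l. y + l - be \<in> Lam} \<union>
    {l. y - l + be \<in> Lam} \<union>
    {l. z + l - ep \<in> Lam} \<union>
    {l. z - l + ep \<in> Lam} \<union>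
    {l. 2*l \<in> Lam} \<union>
    {l. 2*l - 2*ep \<in> Lam})"

lemma bad_sparse: "bad x y z be ep sparse_in UNIV"
proof -
  note sp = TrueI
  have "{l. x + l \<in> Lam} sparse_in UNIV" by (rule sparse_pt[where \<alpha> = "1" and c = "x"]) (simp_all add: algebra_simps)
  note sp = sp this
  have "{l. x - l \<in> Lam} sparse_in UNIV" by (rule sparse_pt[where \<alpha> = "-1" and c = "x"]) (simp_all add: algebra_simps)
  note sp = sp this
  have "{l. y - l + ep \<in> Lam} sparse_in UNIV" by (rule sparse_pt[where \<alpha> = "-1" and c = "y + ep"]) (simp_all add: algebra_simps)
  note sp = sp this
  have "{l. y + l - ep \<in> Lam} sparse_in UNIV" by (rule sparse_pt[where \<alpha> = "1" and c = "y - ep"]) (simp_all add: algebra_simps)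
  note sp = sp this
  have "{l. z + l - be \<in> Lam} sparse_in UNIV" by (rule sparse_pt[where \<alpha> = "1" and c = "z - be"]) (simp_all add: algebra_simps)
  note sp = sp this
  have "{l. z - l + be \<in> Lam} sparse_in UNIV" by (rule sparse_pt[where \<alpha> = "-1" and c = "z + be"]) (simp_all add: algebra_simps)
  note sp = sp this
  have "{l. x + l - ep \<in> Lam} sparse_in UNIV" by (rule sparse_pt[where \<alpha> = "1" and c = "x - ep"]) (simp_all add: algebra_simps)
  note sp = sp this
  have "{l. x - l + ep \<in> Lam} sparse_in UNIV" by (rule sparse_pt[where \<alpha> = "-1" and c = "x + ep"]) (simp_all add: algebra_simps)
  note sp = sp this
  have "{l. x + l - be \<in> Lam} sparse_in UNIV" by (rule sparse_pt[where \<alpha> = "1" and c = "x - be"]) (simp_all add: algebra_simps)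
  note sp = sp this
  have "{l. x - l + be \<in> Lam} sparse_in UNIV" by (rule sparse_pt[where \<alpha> = "-1" and c = "x + be"]) (simp_all add: algebra_simps)
  note sp = sp this
  have "{l. y - l \<in> Lam} sparse_in UNIV" by (rule sparse_pt[where \<alpha> = "-1" and c = "y"]) (simp_all add: algebra_simps)
  note sp = sp this
  have "{l. y + l \<in> Lam} sparse_in UNIV" by (rule sparse_pt[where \<alpha> = "1" and c = "y"]) (simp_all add: algebra_simps)
  note sp = sp this
  have "{l. z - l \<in> Lam} sparse_in UNIV" by (rule sparse_pt[where \<alpha> = "-1" and c = "z"]) (simp_all add: algebra_simps)
  note sp = sp this
  have "{l. z + l \<in> Lam} sparse_in UNIV" by (rule sparse_pt[where \<alpha> = "1" and c = "z"]) (simp_all add: algebra_simps)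
  note sp = sp this
  have "{l. y + l - be \<in> Lam} sparse_in UNIV" by (rule sparse_pt[where \<alpha> = "1" and c = "y - be"]) (simp_all add: algebra_simps)
  note sp = sp this
  have "{l. y - l + be \<in> Lam} sparse_in UNIV" by (rule sparse_pt[where \<alpha> = "-1" and c = "y + be"]) (simp_all add: algebra_simps)
  note sp = sp this
  have "{l. z + l - ep \<in> Lam} sparse_in UNIV" by (rule sparse_pt[where \<alpha> = "1" and c = "z - ep"]) (simp_all add: algebra_simps)
  note sp = sp this
  have "{l. z - l + ep \<in> Lam} sparse_in UNIV" by (rule sparse_pt[where \<alpha> = "-1" and c = "z + ep"]) (simp_all add: algebra_simps)
  note sp = sp this
  have "{l. 2*l \<in> Lam} sparse_in UNIV" by (rule sparse_pt[where \<alpha> = "2" and c = "0"]) (simp_all add: algebra_simps)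
  note sp = sp this
  have "{l. 2*l - 2*ep \<in> Lam} sparse_in UNIV" by (rule sparse_pt[where \<alpha> = "2" and c = "- 2*ep"]) (simp_all add: algebra_simps)
  note sp = sp this
  thus ?thesis unfolding bad_def using sp by (intro sparse_in_union') auto
qed

end

theorem mainTheorem7:
  fixes w1 w2 eps :: complex
    and \<beta> :: "int \<Rightarrow> complex"
    and x p G :: "int \<Rightarrow> int \<Rightarrow> complex"
  assumes periods: "Im (w2 / w1) \<noteq> 0"
    and eps_nz: "eps \<noteq> 0"
    and gen_F: "\<forall>k n.
        wF_ok w1 w2 (x k n) (x k (n + 1)) eps \<and>
        wF_ok w1 w2 (x k n) (x (k - 1) (n + 1)) (\<beta> (k - 1) - eps) \<and>
        wF_ok w1 w2 (x k n) (x k (n - 1)) eps \<and>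
        wF_ok w1 w2 (x k n) (x (k + 1) (n - 1)) (\<beta> k - eps) \<and>
        wF_ok w1 w2 (x k n) (x (k + 1) n) (\<beta> k) \<and>
        wF_ok w1 w2 (x k n) (x (k - 1) n) (\<beta> (k - 1))"
    and gen_x: "\<forall>k n. wsigma w1 w2 (2 * x k n) \<noteq> 0"
    and toda: "\<forall>k n.
        wF w1 w2 (x k n) (x k (n + 1)) eps * wF w1 w2 (x k n) (x (k - 1) (n + 1)) (\<beta> (k - 1) - eps) *
        wF w1 w2 (x k n) (x k (n - 1)) eps * wF w1 w2 (x k n) (x (k + 1) (n - 1)) (\<beta> k - eps)
      = wF w1 w2 (x k n) (x (k + 1) n) (\<beta> k) * wF w1 w2 (x k n) (x (k - 1) n) (\<beta> (k - 1))"
    and p_def: "\<forall>k n. exp (2 * p k n) =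
        wF w1 w2 (x k n) (x k (n - 1)) eps * wF w1 w2 (x k n) (x (k + 1) (n - 1)) (\<beta> k - eps)"
    and G_def: "\<forall>k n. exp (2 * eps * G k n) =
        wF w1 w2 (x k n) (x (k - 1) n) (\<beta> (k - 1)) / wF w1 w2 (x k n) (x (k - 1) (n + 1)) (\<beta> (k - 1) - eps)"
  shows "\<forall>k n. \<exists>S :: complex set. S sparse_in UNIV \<and>
      (\<forall>l. l \<notin> S \<longrightarrow> (\<exists>c :: complex. c \<noteq> 0 \<and>
         wL w1 w2 (p k (n + 1)) (x k (n + 1)) (\<beta> k) l ** wV w1 w2 eps (G k n) (x k n) l
         = c *\<^sub>m (wV w1 w2 eps (G (k + 1) n) (x (k + 1) n) l ** wL w1 w2 (p k n) (x k n) (\<beta> k) l)))"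
proof -
  interpret W: wlat w1 w2 by unfold_locales (rule periods)
  show ?thesis
  proof (intro allI)
    fix k n
    define S where "S = W.bad (x k n) (x k (n + 1)) (x (k + 1) n) (\<beta> k) eps"
    have spS: "S sparse_in UNIV" unfolding S_def by (rule W.bad_sparse)
    have okA: "wF_ok w1 w2 (x k n) (x k (n + 1)) eps" using gen_F by blast
    have okB: "wF_ok w1 w2 (x k (n + 1)) (x (k + 1) n) (\<beta> k - eps)"
      using gen_F[rule_format, of k "n + 1"] by simp
    have okD: "wF_ok w1 w2 (x k n) (x (k + 1) n) (\<beta> k)" using gen_F by blast
    have okE: "wF_ok w1 w2 (x k n) (x (k - 1) (n + 1)) (\<beta> (k - 1) - eps)" using gen_F by blast
    have X0: "wsigma w1 w2 (2 * x k n) \<noteq> 0" and Y0: "wsigma w1 w2 (2 * x k (n + 1)) \<noteq> 0"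
      and Z0: "wsigma w1 w2 (2 * x (k + 1) n) \<noteq> 0" using gen_x by blast+
    have C2: "(exp (p k (n + 1)))\<^sup>2 = wF w1 w2 (x k (n + 1)) (x k n) eps * wF w1 w2 (x k (n + 1)) (x (k + 1) n) (\<beta> k - eps)"
      using p_def[rule_format, of k "n + 1"] unfolding exp_sq by simp
    have d2: "(exp (eps * G (k + 1) n))\<^sup>2 = wF w1 w2 (x (k + 1) n) (x k n) (\<beta> k) / wF w1 w2 (x (k + 1) n) (x k (n + 1)) (\<beta> k - eps)"
      using G_def[rule_format, of "k + 1" n] unfolding exp_sq by (simp add: mult.assoc)
    have ab: "(exp (p k n))\<^sup>2 * wF w1 w2 (x k n) (x k (n + 1)) eps = (exp (eps * G k n))\<^sup>2 * wF w1 w2 (x k n) (x (k + 1) n) (\<beta> k)"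
    proof -
      define F1 where "F1 = wF w1 w2 (x k n) (x k (n + 1)) eps"
      define F2 where "F2 = wF w1 w2 (x k n) (x (k - 1) (n + 1)) (\<beta> (k - 1) - eps)"
      define F34 where "F34 = wF w1 w2 (x k n) (x k (n - 1)) eps * wF w1 w2 (x k n) (x (k + 1) (n - 1)) (\<beta> k - eps)"
      define F5 where "F5 = wF w1 w2 (x k n) (x (k + 1) n) (\<beta> k)"
      define F6 where "F6 = wF w1 w2 (x k n) (x (k - 1) n) (\<beta> (k - 1))"
      have F2nz: "F2 \<noteq> 0" unfolding F2_def by (rule wF_nz[OF okE])
      have t: "F1 * F2 * F34 = F5 * F6"
        using toda[rule_format, of k n] by (simp add: F1_def F2_def F34_def F5_def F6_def mult.assoc)
      have pa: "(exp (p k n))\<^sup>2 = F34" using p_def[rule_format, of k n] unfolding exp_sq by (simp add: F34_def)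
      have gb: "(exp (eps * G k n))\<^sup>2 = F6 / F2" using G_def[rule_format, of k n] unfolding exp_sq
        by (simp add: F6_def F2_def mult.assoc)
      show ?thesis unfolding pa gb F1_def[symmetric] F5_def[symmetric]
        using t F2nz by (simp add: field_simps)
    qed
    show "\<exists>S. S sparse_in UNIV \<and> (\<forall>l. l \<notin> S \<longrightarrow> (\<exists>c. c \<noteq> 0 \<and>
         wL w1 w2 (p k (n + 1)) (x k (n + 1)) (\<beta> k) l ** wV w1 w2 eps (G k n) (x k n) l
         = c *\<^sub>m (wV w1 w2 eps (G (k + 1) n) (x (k + 1) n) l ** wL w1 w2 (p k n) (x k n) (\<beta> k) l)))"
    proof (intro exI[of _ S] conjI allI impI spS)
      fix l assume "l \<notin> S"
      hence gl: "x k n + l \<notin> W.Lam" "x k n - l \<notin> W.Lam" "x k (n + 1) - l + eps \<notin> W.Lam" "x k (n + 1) + l - eps \<notin> W.Lam"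
            "x (k + 1) n + l - \<beta> k \<notin> W.Lam" "x (k + 1) n - l + \<beta> k \<notin> W.Lam"
            "x k n + l - eps \<notin> W.Lam" "x k n - l + eps \<notin> W.Lam" "x k n + l - \<beta> k \<notin> W.Lam" "x k n - l + \<beta> k \<notin> W.Lam"
            "x k (n + 1) - l \<notin> W.Lam" "x k (n + 1) + l \<notin> W.Lam" "x (k + 1) n - l \<notin> W.Lam" "x (k + 1) n + l \<notin> W.Lam"
            "x k (n + 1) + l - \<beta> k \<notin> W.Lam" "x k (n + 1) - l + \<beta> k \<notin> W.Lam" "x (k + 1) n + l - eps \<notin> W.Lam"
            "x (k + 1) n - l + eps \<notin> W.Lam" "2*l \<notin> W.Lam" "2*l - 2*eps \<notin> W.Lam"
        by (simp_all add: S_def W.bad_def)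
      show "\<exists>c. c \<noteq> 0 \<and>
         wL w1 w2 (p k (n + 1)) (x k (n + 1)) (\<beta> k) l ** wV w1 w2 eps (G k n) (x k n) l
         = c *\<^sub>m (wV w1 w2 eps (G (k + 1) n) (x (k + 1) n) l ** wL w1 w2 (p k n) (x k n) (\<beta> k) l)"
        by (rule W.main_local[OF okA okB okD X0 Y0 Z0 C2 d2 ab gl])
    qed
  qed
qed


end
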